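(* Let $\mathbb{G}$ be a stratified group, $\mathbb{M}$ a graded group of step $\upsilon$ with Lie algebra $\mathcal{M}=W_1\oplus\cdots\oplus W_\upsilon$, $\Omega\subset\mathbb{G}$ open, and let $f:\Omega\to\mathbb{M}$ be P-differentiable at $x\in\Omega$. Write $f=\exp\circ F$, $F=F_1+\cdots+F_\upsilon$ with $F_j:\Omega\to W_j$. Then every $F_j$ is P-differentiable at $x$ and $$\pi_1\circ df(x)=dF_1(x),\qquad dF_i(x)(h)=\sum_{n=2}^{\upsilon}\frac{(-1)^n}{n!}\,\pi_i\big([F(x),dF(x)(h)]_{n-1}\big)$$ for every $i=2,\ldots,\upsilon$ and every $h\in\mathcal{G}$, where $dF(x)=\sum_jdF_j(x)$.
   Context: Graded group: connected simply connected real Lie group with Lie algebra $V_1\oplus\cdots\oplus V_\iota$, $[V_i,V_j]\subset V_{i+j}$; stratified if $[V_i,V_j]=V_{i+j}$; $\mathcal{G}$ is the Lie algebra of $\mathbb{G}$; dilations act by $r^i$ on the $i$-th layer. Homogeneous distances $d$ on $\mathbb{G}$, $\rho$ on $\mathbb{M}$: continuous, left invariant, 1-homogeneous under dilations. h-homomorphism: group homomorphism commuting with dilations. $f$ is P-differentiable at $x$ if there is an h-homomorphism $Df(x)$ with $\rho(f(x)^{-1}f(xh),Df(x)(h))/d(h,e)\to0$ as $h\to e$; $df(x)=\exp^{-1}\circ Df(x)\circ\exp$. Vector spaces $W$ are graded groups $(W,+)$ with one layer and dilations $v\mapsto rv$, giving P-differentiability of $F_j$. $\pi_j$ projects $\mathcal{M}$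 onto $W_j$; $[X,Y]_0=Y$, $[X,Y]_k=[X,[X,Y]_{k-1}]$. *)

theory Defs
  imports "HOL-Analysis.Analysis"
begin

text \<open>Graded groups are modelled in exponential coordinates: the group is its
Lie algebra (a finite-dimensional real vector space, type of class euclidean_space),
the exponential map is the identity, and the group law is the
Baker-Campbell-Hausdorff product given by Dynkin's formula (a finite sum by
nilpotency). Identity is 0, the inverse of x is -x.\<close>

definition graded_algebra :: "('a::euclidean_space \<Rightarrow> 'a \<Rightarrow> 'a) \<Rightarrow> (nat \<Rightarrow> 'a set) \<Rightarrow> nat \<Rightarrow> bool" where
  "graded_algebra br V s \<longleftrightarrow>
     1 \<le> s \<and> bilinear br \<and> (\<forall>x y. br x y = - br y x) \<and>
     (\<forall>x y z. br x (br y z) + br y (br z x) + br z (br x y) = 0) \<and>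
     (\<forall>i. subspace (V i)) \<and> (\<forall>i. (i = 0 \<or> s < i) \<longrightarrow> V i = {0}) \<and>
     (\<forall>x. \<exists>!v. (\<forall>i. v i \<in> V i) \<and> x = (\<Sum>i=1..s. v i)) \<and>
     (\<forall>i j x y. x \<in> V i \<longrightarrow> y \<in> V j \<longrightarrow> br x y \<in> V (i + j))"

definition stratified :: "('a::euclidean_space \<Rightarrow> 'a \<Rightarrow> 'a) \<Rightarrow> (nat \<Rightarrow> 'a set) \<Rightarrow> nat \<Rightarrow> bool" where
  "stratified br V s \<longleftrightarrow> graded_algebra br V s \<and>
     (\<forall>i j. 1 \<le> i \<longrightarrow> 1 \<le> j \<longrightarrow> span {br x y | x y. x \<in> V i \<and> y \<in> V j} = V (i + j))"

definition graded_of_step :: "('a::euclidean_space \<Rightarrow> 'a \<Rightarrow> 'a) \<Rightarrow> (nat \<Rightarrow> 'a set) \<Rightarrow> nat \<Rightarrow> bool" where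
  "graded_of_step br V s \<longleftrightarrow> graded_algebra br V s \<and> V s \<noteq> {0}"

definition layer :: "(nat \<Rightarrow> 'a::euclidean_space set) \<Rightarrow> nat \<Rightarrow> nat \<Rightarrow> 'a \<Rightarrow> 'a" where
  "layer V s i x = (THE v. (\<forall>k. v k \<in> V k) \<and> x = (\<Sum>k=1..s. v k)) i"

definition dil :: "(nat \<Rightarrow> 'a::euclidean_space set) \<Rightarrow> nat \<Rightarrow> real \<Rightarrow> 'a \<Rightarrow> 'a" where
  "dil V s r x = (\<Sum>i=1..s. (r ^ i) *\<^sub>R layer V s i x)"

fun nbr :: "('a::zero \<Rightarrow> 'a \<Rightarrow> 'a) \<Rightarrow> 'a list \<Rightarrow> 'a" where
  "nbr br [] = 0"
| "nbr br [a] = a"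
| "nbr br (a # b # l) = br a (nbr br (b # l))"

definition dynkin_word :: "'a \<Rightarrow> 'a \<Rightarrow> (nat \<times> nat) list \<Rightarrow> 'a list" where
  "dynkin_word x y rs = concat (map (\<lambda>(r, t). replicate r x @ replicate t y) rs)"

definition dynkin_tuples :: "nat \<Rightarrow> nat \<Rightarrow> (nat \<times> nat) list set" where
  "dynkin_tuples s n = {rs. length rs = n \<and> (\<forall>p\<in>set rs. 0 < fst p + snd p)
                          \<and> sum_list (map (\<lambda>p. fst p + snd p) rs) \<le> s}"

definition dynkin_coeff :: "(nat \<times> nat) list \<Rightarrow> real" where
  "dynkin_coeff rs = 1 / (real (sum_list (map (\<lambda>p. fst p + snd p) rs))
                        * prod_list (map (\<lambda>p. fact (fst p) * fact (snd p)) rs))"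

text \<open>BCH product (Dynkin's formula, truncated at the step s; longer brackets vanish).\<close>
definition bch :: "('a::euclidean_space \<Rightarrow> 'a \<Rightarrow> 'a) \<Rightarrow> nat \<Rightarrow> 'a \<Rightarrow> 'a \<Rightarrow> 'a" where
  "bch br s x y = (\<Sum>n=1..s. ((-1) ^ (n - 1) / real n) *\<^sub>R
       (\<Sum>rs\<in>dynkin_tuples s n. dynkin_coeff rs *\<^sub>R nbr br (dynkin_word x y rs)))"

definition hom_dist :: "('a::euclidean_space \<Rightarrow> 'a \<Rightarrow> 'a) \<Rightarrow> (nat \<Rightarrow> 'a set) \<Rightarrow> nat \<Rightarrow> ('a \<Rightarrow> 'a \<Rightarrow> real) \<Rightarrow> bool" where
  "hom_dist br V s d \<longleftrightarrow>
     (\<forall>x y. d x y = 0 \<longleftrightarrow> x = y) \<and> (\<forall>x y. d x y = d y x) \<and>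
     (\<forall>x y z. d x z \<le> d x y + d y z) \<and>
     continuous_on UNIV (\<lambda>p. d (fst p) (snd p)) \<and>
     (\<forall>z x y. d (bch br s z x) (bch br s z y) = d x y) \<and>
     (\<forall>r>0. \<forall>x y. d (dil V s r x) (dil V s r y) = r * d x y)"

definition hhom :: "('a::euclidean_space \<Rightarrow> 'a \<Rightarrow> 'a) \<Rightarrow> (nat \<Rightarrow> 'a set) \<Rightarrow> nat \<Rightarrow>
                    ('b::euclidean_space \<Rightarrow> 'b \<Rightarrow> 'b) \<Rightarrow> (nat \<Rightarrow> 'b set) \<Rightarrow> nat \<Rightarrow> ('a \<Rightarrow> 'b) \<Rightarrow> bool" where
  "hhom brG VG sG brM VM sM L \<longleftrightarrow>
     (\<forall>x y. L (bch brG sG x y) = bch brM sM (L x) (L y)) \<and>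
     (\<forall>r>0. \<forall>x. L (dil VG sG r x) = dil VM sM r (L x))"

text \<open>L is the P-differential Df(x) (= df(x), as exp is the identity) of f at x.\<close>
definition P_diff :: "('a::euclidean_space \<Rightarrow> 'a \<Rightarrow> 'a) \<Rightarrow> (nat \<Rightarrow> 'a set) \<Rightarrow> nat \<Rightarrow> ('a \<Rightarrow> 'a \<Rightarrow> real) \<Rightarrow>
                    ('b::euclidean_space \<Rightarrow> 'b \<Rightarrow> 'b) \<Rightarrow> (nat \<Rightarrow> 'b set) \<Rightarrow> nat \<Rightarrow> ('b \<Rightarrow> 'b \<Rightarrow> real) \<Rightarrow>
                    ('a \<Rightarrow> 'b) \<Rightarrow> 'a \<Rightarrow> ('a \<Rightarrow> 'b) \<Rightarrow> bool" where
  "P_diff brG VG sG d brM VM sM \<rho> f x L \<longleftrightarrow>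
     hhom brG VG sG brM VM sM L \<and>
     ((\<lambda>h. \<rho> (bch brM sM (- f x) (f (bch brG sG x h))) (L h) / d h 0) \<longlongrightarrow> 0) (at 0)"

text \<open>P-differential of a map into a vector space W (graded group (W,+), one layer,
dilations v \<mapsto> r v, homogeneous distance given by the norm).\<close>
definition P_diff_vec :: "('a::euclidean_space \<Rightarrow> 'a \<Rightarrow> 'a) \<Rightarrow> (nat \<Rightarrow> 'a set) \<Rightarrow> nat \<Rightarrow> ('a \<Rightarrow> 'a \<Rightarrow> real) \<Rightarrow>
                    'b::euclidean_space set \<Rightarrow> ('a \<Rightarrow> 'b) \<Rightarrow> 'a \<Rightarrow> ('a \<Rightarrow> 'b) \<Rightarrow> bool" where
  "P_diff_vec brG VG sG d W F x L \<longleftrightarrow>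
     (\<forall>h. L h \<in> W) \<and>
     (\<forall>a b. L (bch brG sG a b) = L a + L b) \<and>
     (\<forall>r>0. \<forall>h. L (dil VG sG r h) = r *\<^sub>R L h) \<and>
     ((\<lambda>h. norm ((- F x + F (bch brG sG x h)) - L h) / d h 0) \<longlongrightarrow> 0) (at 0)"

definition iter_br :: "('a \<Rightarrow> 'a \<Rightarrow> 'a) \<Rightarrow> nat \<Rightarrow> 'a \<Rightarrow> 'a \<Rightarrow> 'a" where
  "iter_br br k X Y = (br X ^^ k) Y"

end

theory Submission
  imports Defs
begin

locale ga =
  fixes br :: "'a::euclidean_space \<Rightarrow> 'a \<Rightarrow> 'a" and V :: "nat \<Rightarrow> 'a set" and s :: nat
  assumes GA: "graded_algebra br V s"
begin
abbreviation "pr \<equiv> layer V s"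
lemmas GA' = GA[unfolded graded_algebra_def]
lemma GAD: "1 \<le> s" "bilinear br" "\<forall>x y. br x y = - br y x" "\<forall>i. subspace (V i)"
  "\<forall>i. (i = 0 \<or> s < i) \<longrightarrow> V i = {0}" "\<forall>x. \<exists>!v. (\<forall>i. v i \<in> V i) \<and> x = (\<Sum>i=1..s. v i)"
  "\<forall>i j x y. x \<in> V i \<longrightarrow> y \<in> V j \<longrightarrow> br x y \<in> V (i + j)"
  using GA' apply -
  apply (erule conjE, assumption)
  apply (erule conjE, erule conjE, assumption)
  apply (erule conjE, erule conjE, erule conjE, assumption)
  apply (erule conjE, erule conjE, erule conjE, erule conjE, erule conjE, assumption)
  apply (erule conjE, erule conjE, erule conjE, erule conjE, erule conjE, erule conjE, assumption)
  apply (erule conjE, erule conjE, erule conjE, erule conjE, erule conjE, erule conjE, erule conjE, assumption)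
  apply (erule conjE, erule conjE, erule conjE, erule conjE, erule conjE, erule conjE, erule conjE, assumption)
  done
lemma triv: "i = 0 \<or> s < i \<Longrightarrow> V i = {0}" using GAD(5) by blast
lemma antisym: "br x y = - br y x" using GAD(3) by blast
lemma br_self: "br x x = 0"
proof -
  have "br x x + br x x = 0" using antisym[of x x] by (simp add: eq_neg_iff_add_eq_0)
  then have "2 *\<^sub>R br x x = 0" by (simp add: scaleR_2)
  then show ?thesis by simp
qed
lemma s_ge1: "1 \<le> s" using GAD(1) .
lemma bil: "bilinear br" using GAD(2) .
lemma subsp: "subspace (V i)" using GAD(4) by blast
lemma ex1: "\<exists>!v. (\<forall>i. v i \<in> V i) \<and> x = (\<Sum>i=1..s. v i)" using GAD(6) by blast
lemma brV: "x \<in> V i \<Longrightarrow> y \<in> V j \<Longrightarrow> br x y \<in> V (i + j)" using GAD(7) by blast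

lemma bbil: "bounded_bilinear br" using bil bilinear_conv_bounded_bilinear by blast


lemma layer_eq: assumes "\<forall>k. v k \<in> V k" "x = (\<Sum>k=1..s. v k)" shows "pr i x = v i"
proof -
  have "(THE v. (\<forall>k. v k \<in> V k) \<and> x = (\<Sum>k=1..s. v k)) = v"
    by (rule the1_equality[OF ex1]) (use assms in auto)
  then show ?thesis unfolding layer_def by simp
qed

lemma layer_props: "(\<forall>k. pr k x \<in> V k) \<and> x = (\<Sum>k=1..s. pr k x)"
proof -
  have "(\<forall>k. (THE v. (\<forall>k. v k \<in> V k) \<and> x = (\<Sum>k=1..s. v k)) k \<in> V k) \<and>
        x = (\<Sum>k=1..s. (THE v. (\<forall>k. v k \<in> V k) \<and> x = (\<Sum>k=1..s. v k)) k)"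
    by (rule theI'[OF ex1])
  then show ?thesis unfolding layer_def by simp
qed

lemma layer_in: "pr k x \<in> V k" using layer_props by blast
lemma decomp: "x = (\<Sum>k=1..s. pr k x)" using layer_props by blast
lemma decomp_sym: "(\<Sum>k=1..s. pr k x) = x" using decomp by metis

lemma layer_out: "i = 0 \<or> s < i \<Longrightarrow> pr i x = 0"
  using layer_in[of i x] triv[of i] by auto

lemma layer_add: "pr i (x + y) = pr i x + pr i y"
proof -
  have "pr i (x + y) = (\<lambda>k. pr k x + pr k y) i"
    apply (rule layer_eq)
    using layer_in subspace_add[OF subsp] apply blast
    by (simp only: sum.distrib decomp_sym)
  then show ?thesis by simp
qed

lemma layer_scale: "pr i (c *\<^sub>R x) = c *\<^sub>R pr i x"
proof -
  have "pr i (c *\<^sub>R x) = (\<lambda>k. c *\<^sub>R pr k x) i"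
    apply (rule layer_eq)
    using layer_in subspace_scale[OF subsp] apply blast
    by (simp only: scaleR_right.sum[symmetric] decomp_sym)
  then show ?thesis by simp
qed

lemma linear_layer: "linear (pr i)"
  by (rule linearI) (auto simp: layer_add layer_scale)

lemma layer_zero[simp]: "pr i 0 = 0"
  using linear_0[OF linear_layer] by simp
lemma layer_neg: "pr i (- x) = - pr i x"
  using linear_neg[OF linear_layer] by simp
lemma layer_diff: "pr i (x - y) = pr i x - pr i y"
  using linear_diff[OF linear_layer] by simp
lemma layer_sum: "pr i (sum f S) = (\<Sum>j\<in>S. pr i (f j))"
  using linear_sum[OF linear_layer] by simp

lemma layer_of_V: assumes "v \<in> V k" shows "pr i v = (if i = k then v else 0)"
proof -
  have "pr i v = (\<lambda>j. if j = k then v else 0) i"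
  proof (rule layer_eq)
    show "\<forall>j. (if j = k then v else 0) \<in> V j"
      using assms subspace_0[OF subsp] by auto
    show "v = (\<Sum>j = 1..s. if j = k then v else 0)"
    proof (cases "k \<in> {1..s}")
      case True then show ?thesis by (simp add: sum.delta)
    next
      case False
      then have "v = 0" using assms triv[of k] by auto
      then show ?thesis by simp
    qed
  qed
  then show ?thesis by simp
qed

lemma layer_layer: "pr i (pr k x) = (if i = k then pr k x else 0)"
  using layer_of_V[OF layer_in] by simp

lemma eq_layers: assumes "\<And>k. k \<in> {1..s} \<Longrightarrow> pr k x = pr k y" shows "x = y"
  proof -
  have "(\<Sum>k=1..s. pr k x) = (\<Sum>k=1..s. pr k y)" using assms by (intro sum.cong) auto
  then show ?thesis by (simp only: decomp_sym)
qed

definition Fil :: "nat \<Rightarrow> 'a set" where "Fil a = {x. \<forall>j<a. pr j x = 0}"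

lemma Fil_sub: "subspace (Fil a)"
  unfolding subspace_def Fil_def by (auto simp: layer_add layer_scale)

lemma Fil_mono: "a \<le> b \<Longrightarrow> Fil b \<subseteq> Fil a"
  unfolding Fil_def by auto

lemma Fil_1[simp]: "Fil 1 = UNIV" "Fil 0 = UNIV"
  unfolding Fil_def using layer_out by auto

lemma Fil_big: assumes "s < a" shows "Fil a = {0}"
proof -
  have "x = 0" if "x \<in> Fil a" for x
  proof (rule eq_layers)
    fix k assume "k \<in> {1..s}"
    then show "pr k x = pr k 0" using that assms unfolding Fil_def by simp
  qed
  moreover have "0 \<in> Fil a" by (rule subspace_0[OF Fil_sub])
  ultimately show ?thesis by auto
qed

lemma V_Fil: assumes "v \<in> V k" "a \<le> k" shows "v \<in> Fil a"
  unfolding Fil_def using layer_of_V[OF assms(1)] assms(2) by simp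

lemma Fil_layer: "x \<in> Fil a \<Longrightarrow> j < a \<Longrightarrow> pr j x = 0" unfolding Fil_def by auto

lemma Fil_add: "x \<in> Fil a \<Longrightarrow> y \<in> Fil a \<Longrightarrow> x + y \<in> Fil a"
  using subspace_add[OF Fil_sub] by blast
lemma Fil_diff: "x \<in> Fil a \<Longrightarrow> y \<in> Fil a \<Longrightarrow> x - y \<in> Fil a"
  using subspace_diff[OF Fil_sub] by blast
lemma Fil_scale: "x \<in> Fil a \<Longrightarrow> c *\<^sub>R x \<in> Fil a"
  using subspace_scale[OF Fil_sub] by blast
lemma Fil_neg: "x \<in> Fil a \<Longrightarrow> - x \<in> Fil a"
  using subspace_neg[OF Fil_sub] by blast
lemma Fil_0: "0 \<in> Fil a"
  using subspace_0[OF Fil_sub] by blast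
lemma Fil_sum: "(\<And>i. i \<in> S \<Longrightarrow> f i \<in> Fil a) \<Longrightarrow> sum f S \<in> Fil a"
  using subspace_sum[OF Fil_sub] by blast

lemma br_Fil: assumes "x \<in> Fil a" "y \<in> Fil b" shows "br x y \<in> Fil (a + b)"
proof -
  have "br x y = br (\<Sum>k=1..s. pr k x) (\<Sum>k=1..s. pr k y)"
    using decomp[of x] decomp[of y] by simp
  also have "\<dots> = (\<Sum>(i,j)\<in>{1..s}\<times>{1..s}. br (pr i x) (pr j y))"
    by (rule bilinear_sum[OF bil])
  also have "\<dots> \<in> Fil (a + b)"
  proof (rule Fil_sum, clarify)
    fix i j assume "i \<in> {1..s}" "j \<in> {1..s}"
    show "br (pr i x) (pr j y) \<in> Fil (a + b)"
    proof (cases "i < a \<or> j < b")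
      case True
      then have "pr i x = 0 \<or> pr j y = 0" using assms Fil_layer by blast
      then show ?thesis using bilinear_lzero[OF bil] bilinear_rzero[OF bil] Fil_0 by auto
    next
      case False
      then show ?thesis by (intro V_Fil[OF brV[OF layer_in layer_in]]) simp
    qed
  qed
  finally show ?thesis .
qed

end

definition tot :: "(nat \<times> nat) list \<Rightarrow> nat" where
  "tot rs = sum_list (map (\<lambda>p. fst p + snd p) rs)"

lemma dw_simps[simp]: "dynkin_word x y [] = []"
  "dynkin_word x y (p # rs) = replicate (fst p) x @ replicate (snd p) y @ dynkin_word x y rs"
  by (auto simp: dynkin_word_def split: prod.splits)

lemma dw_append: "dynkin_word x y (rs @ qs) = dynkin_word x y rs @ dynkin_word x y qs"
  by (simp add: dynkin_word_def)

lemma length_dw: "length (dynkin_word x y rs) = tot rs"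
  by (induction rs) (auto simp: tot_def)

lemma map_dw: "map f (dynkin_word x y rs) = dynkin_word (f x) (f y) rs"
  by (induction rs) auto

lemma set_dw: "set (dynkin_word x y rs) \<subseteq> {x, y}"
  by (induction rs) auto

lemma list_all2_replicate': "P x y \<Longrightarrow> list_all2 P (replicate n x) (replicate n y)"
  by (induction n) auto

lemma list_all2_dw: "P x x' \<Longrightarrow> P y y' \<Longrightarrow> list_all2 P (dynkin_word x y rs) (dynkin_word x' y' rs)"
  by (induction rs) (auto intro!: list_all2_appendI list_all2_replicate')

lemma tot_ge_len: "\<forall>p\<in>set rs. 0 < fst p + snd p \<Longrightarrow> length rs \<le> tot rs"
  by (induction rs) (auto simp: tot_def)

lemma tot_cons[simp]: "tot (p # rs) = fst p + snd p + tot rs" "tot [] = 0"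
  by (auto simp: tot_def)
lemma tot_append: "tot (rs @ qs) = tot rs + tot qs" by (simp add: tot_def)

lemma dt_alt: "dynkin_tuples s n = {rs. length rs = n \<and> (\<forall>p\<in>set rs. 0 < fst p + snd p) \<and> tot rs \<le> s}"
  by (simp add: dynkin_tuples_def tot_def)

lemma elem_le_tot: "p \<in> set rs \<Longrightarrow> fst p + snd p \<le> tot rs"
  by (induction rs) auto

lemma finite_dt: "finite (dynkin_tuples s n)"
proof -
  have "dynkin_tuples s n \<subseteq> {rs. set rs \<subseteq> {0..s} \<times> {0..s} \<and> length rs = n}"
    unfolding dt_alt using elem_le_tot by fastforce
  moreover have "finite {rs. set rs \<subseteq> {0..s} \<times> {0..s} \<and> length rs = n}"
    by (rule finite_lists_length_eq) simp
  ultimately show ?thesis by (rule finite_subset)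
qed

abbreviation cn :: "nat \<Rightarrow> real" where "cn n \<equiv> (-1) ^ (n - 1) / real n"

lemma LEN1:
  fixes H :: "'b list \<Rightarrow> 'a::real_vector"
  assumes s: "1 \<le> s" and H: "\<And>l. length l \<noteq> 1 \<Longrightarrow> H l = 0"
  shows "(\<Sum>n=1..s. cn n *\<^sub>R (\<Sum>rs\<in>dynkin_tuples s n. dynkin_coeff rs *\<^sub>R H (dynkin_word x y rs)))
         = H [x] + H [y]"
proof -
  have z: "(\<Sum>rs\<in>dynkin_tuples s n. dynkin_coeff rs *\<^sub>R H (dynkin_word x y rs)) = 0" if "2 \<le> n" for n
  proof (rule sum.neutral, clarify)
    fix rs assume "rs \<in> dynkin_tuples s n"
    then have "length rs = n" "\<forall>p\<in>set rs. 0 < fst p + snd p" unfolding dt_alt by auto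
    then have "length (dynkin_word x y rs) \<noteq> 1" using tot_ge_len[of rs] that by (simp add: length_dw)
    then show "dynkin_coeff rs *\<^sub>R H (dynkin_word x y rs) = 0" using H by simp
  qed
  have one: "(\<Sum>rs\<in>dynkin_tuples s 1. dynkin_coeff rs *\<^sub>R H (dynkin_word x y rs))
      = (\<Sum>rs\<in>{[(1,0)], [(0,1)]}. dynkin_coeff rs *\<^sub>R H (dynkin_word x y rs))"
  proof (rule sum.mono_neutral_right[OF finite_dt])
    show "{[(1, 0)], [(0, 1)]} \<subseteq> dynkin_tuples s 1" using s unfolding dt_alt by auto
    show "\<forall>i\<in>dynkin_tuples s 1 - {[(1, 0)], [(0, 1)]}. dynkin_coeff i *\<^sub>R H (dynkin_word x y i) = 0"
    proof
      fix rs assume a: "rs \<in> dynkin_tuples s 1 - {[(1, 0)], [(0, 1)]}"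
      then obtain r t where rs: "rs = [(r,t)]" unfolding dt_alt by (auto simp: length_Suc_conv)
      have "r + t \<noteq> 1" using a rs by auto
      then have "length (dynkin_word x y rs) \<noteq> 1" using rs by (simp add: length_dw)
      then show "dynkin_coeff rs *\<^sub>R H (dynkin_word x y rs) = 0" using H by simp
    qed
  qed
  have "(\<Sum>n=1..s. cn n *\<^sub>R (\<Sum>rs\<in>dynkin_tuples s n. dynkin_coeff rs *\<^sub>R H (dynkin_word x y rs)))
      = cn 1 *\<^sub>R (\<Sum>rs\<in>dynkin_tuples s 1. dynkin_coeff rs *\<^sub>R H (dynkin_word x y rs))
        + (\<Sum>n=Suc 1..s. cn n *\<^sub>R (\<Sum>rs\<in>dynkin_tuples s n. dynkin_coeff rs *\<^sub>R H (dynkin_word x y rs)))"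
    by (rule sum.atLeast_Suc_atMost[OF s])
  also have "(\<Sum>n=Suc 1..s. cn n *\<^sub>R (\<Sum>rs\<in>dynkin_tuples s n. dynkin_coeff rs *\<^sub>R H (dynkin_word x y rs))) = 0"
    by (rule sum.neutral) (auto simp: z)
  finally show ?thesis using one by (simp add: dynkin_coeff_def)
qed

definition nbr2 :: "('a::zero \<Rightarrow> 'a \<Rightarrow> 'a) \<Rightarrow> 'a list \<Rightarrow> 'a" where
  "nbr2 br l = (if length l = 1 then 0 else nbr br l)"

context ga begin

lemma Fil_Suc0[simp]: "Fil (Suc 0) = UNIV" using Fil_1 by simp

lemma nbr_zero_letters: "(\<forall>w\<in>set l. w = 0) \<Longrightarrow> nbr br l = 0"
  by (induction l rule: induct_list012) (auto simp: bilinear_lzero[OF bil])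

lemma nbr_mult: "2 \<le> length l \<Longrightarrow> \<forall>w\<in>set l. \<exists>c. w = c *\<^sub>R v \<Longrightarrow> nbr br l = 0"
proof (induction l rule: induct_list012)
  case (3 a b zs)
  show ?case
  proof (cases "zs = []")
    case True
    then obtain c d where "a = c *\<^sub>R v" "b = d *\<^sub>R v" using "3.prems" by auto
    then show ?thesis using True
      by (simp add: bilinear_lmul[OF bil] bilinear_rmul[OF bil] br_self)
  next
    case False
    then have "nbr br (b # zs) = 0" using "3.IH"(2) "3.prems" by (cases zs) auto
    then show ?thesis by (simp add: bilinear_rzero[OF bil])
  qed
qed auto

lemma nbr_trunc: "list_all2 (\<lambda>a b. a - b \<in> Fil j) l l' \<Longrightarrow> 2 \<le> length l \<Longrightarrow>
   nbr br l - nbr br l' \<in> Fil (Suc j)"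
proof (induction l arbitrary: l' rule: induct_list012)
  case (3 a b zs)
  then obtain a' b' zs' where l': "l' = a' # b' # zs'" and aa: "a - a' \<in> Fil j" and bb: "b - b' \<in> Fil j"
    and zz: "list_all2 (\<lambda>a b. a - b \<in> Fil j) zs zs'"
    by (auto simp: list_all2_Cons1)
  define A where "A = nbr br (b # zs)"
  define A' where "A' = nbr br (b' # zs')"
  have eq: "nbr br (a # b # zs) - nbr br l' = br (a - a') A + br a' (A - A')"
    unfolding l' A_def A'_def
    by (simp add: bilinear_lsub[OF bil] bilinear_rsub[OF bil])
  have t1: "br (a - a') A \<in> Fil (Suc j)"
    using br_Fil[OF aa, of A 1] by simp
  have t2: "br a' (A - A') \<in> Fil (Suc j)"
  proof (cases "zs = []")
    case True
    then have "zs' = []" using zz by simp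
    then have "A - A' = b - b'" using True by (simp add: A_def A'_def)
    then show ?thesis using br_Fil[of a' 1 "A - A'" j] bb by simp
  next
    case False
    then have "A - A' \<in> Fil (Suc j)" unfolding A_def A'_def
      using "3.IH"(2)[of "b' # zs'"] zz bb by (cases zs) auto
    then have "br a' (A - A') \<in> Fil (1 + Suc j)" using br_Fil[of a' 1] by simp
    then show ?thesis using Fil_mono[of "Suc j" "1 + Suc j"] by auto
  qed
  show ?case using eq t1 t2 Fil_add by simp
qed auto

definition Qb :: "'a \<Rightarrow> 'a \<Rightarrow> 'a" where
  "Qb x y = (\<Sum>n=1..s. cn n *\<^sub>R (\<Sum>rs\<in>dynkin_tuples s n. dynkin_coeff rs *\<^sub>R nbr2 br (dynkin_word x y rs)))"

lemma bch_split: "bch br s x y = x + y + Qb x y"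
proof -
  define H where "H l = (if length l = 1 then nbr br l else 0)" for l :: "'a list"
  have nb: "nbr br l = nbr2 br l + H l" for l by (simp add: H_def nbr2_def)
  have "bch br s x y = Qb x y +
     (\<Sum>n=1..s. cn n *\<^sub>R (\<Sum>rs\<in>dynkin_tuples s n. dynkin_coeff rs *\<^sub>R H (dynkin_word x y rs)))"
    unfolding bch_def Qb_def nb by (simp add: scaleR_right_distrib sum.distrib)
  also have "(\<Sum>n=1..s. cn n *\<^sub>R (\<Sum>rs\<in>dynkin_tuples s n. dynkin_coeff rs *\<^sub>R H (dynkin_word x y rs))) = H [x] + H [y]"
    by (rule LEN1[OF s_ge1]) (simp add: H_def)
  finally show ?thesis by (simp add: H_def)
qed

lemma Qb_diff: "Qb x y - Qb x' y' = (\<Sum>n=1..s. cn n *\<^sub>R (\<Sum>rs\<in>dynkin_tuples s n. dynkin_coeff rs *\<^sub>R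
    (nbr2 br (dynkin_word x y rs) - nbr2 br (dynkin_word x' y' rs))))"
  unfolding Qb_def by (simp add: scaleR_diff_right sum_subtractf)

lemma Qb_trunc: assumes "x - x' \<in> Fil j" "y - y' \<in> Fil j" shows "Qb x y - Qb x' y' \<in> Fil (Suc j)"
  unfolding Qb_diff
proof (intro Fil_sum Fil_scale)
  fix n rs
  have la: "list_all2 (\<lambda>a b. a - b \<in> Fil j) (dynkin_word x y rs) (dynkin_word x' y' rs)"
    by (rule list_all2_dw) (use assms in auto)
  show "nbr2 br (dynkin_word x y rs) - nbr2 br (dynkin_word x' y' rs) \<in> Fil (Suc j)"
  proof (cases "length (dynkin_word x y rs) \<le> 1")
    case True
    then consider "length (dynkin_word x y rs) = 0" | "length (dynkin_word x y rs) = 1" by linarith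
    then show ?thesis
    proof cases
      case 1
      then have "dynkin_word x y rs = []" "dynkin_word x' y' rs = []" using length_dw by (metis length_0_conv)+
      then show ?thesis using Fil_0 by (simp add: nbr2_def)
    next
      case 2 then show ?thesis using Fil_0 by (simp add: nbr2_def length_dw)
    qed
  next
    case False
    then have "nbr br (dynkin_word x y rs) - nbr br (dynkin_word x' y' rs) \<in> Fil (Suc j)"
      using nbr_trunc[OF la] by simp
    then show ?thesis using False by (simp add: nbr2_def length_dw)
  qed
qed

lemma Qb_mult: "Qb (a *\<^sub>R v) (b *\<^sub>R v) = 0"
  unfolding Qb_def
proof (intro sum.neutral ballI, simp only: scaleR_eq_0_iff, intro disjI2 sum.neutral ballI)
  fix n rs
  have "nbr2 br (dynkin_word (a *\<^sub>R v) (b *\<^sub>R v) rs) = 0"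
  proof (cases "2 \<le> length (dynkin_word (a *\<^sub>R v) (b *\<^sub>R v) rs)")
    case True
    then show ?thesis unfolding nbr2_def using set_dw[of "a *\<^sub>R v" "b *\<^sub>R v" rs]
      by (auto intro!: nbr_mult[of _ v])
  next
    case False
    then consider "length (dynkin_word (a *\<^sub>R v) (b *\<^sub>R v) rs) = 0" | "length (dynkin_word (a *\<^sub>R v) (b *\<^sub>R v) rs) = 1"
      by linarith
    then show ?thesis by cases (auto simp: nbr2_def)
  qed
  then show "dynkin_coeff rs *\<^sub>R nbr2 br (dynkin_word (a *\<^sub>R v) (b *\<^sub>R v) rs) = 0" by simp
qed

lemma bch_mult: "bch br s (a *\<^sub>R v) (b *\<^sub>R v) = (a + b) *\<^sub>R v"
  by (simp add: bch_split Qb_mult scaleR_add_left)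

lemma bch_x0[simp]: "bch br s x 0 = x"
  using bch_mult[of 1 x 0] by simp
lemma bch_0y[simp]: "bch br s 0 y = y"
  using bch_mult[of 0 y 1] by simp
lemma bch_neg[simp]: "bch br s (- x) x = 0"
  using bch_mult[of "-1" x 1] by simp
lemma bch_negr[simp]: "bch br s x (- x) = 0"
  using bch_mult[of 1 x "-1"] by simp
lemma bch_same: "bch br s x x = 2 *\<^sub>R x"
  using bch_mult[of 1 x 1] by simp
lemma Qb_00: "Qb 0 0 = 0"
  using Qb_mult[of 0 0 0] by simp

lemma Fil_Suc: "x \<in> Fil (Suc j) \<longleftrightarrow> x \<in> Fil j \<and> pr j x = 0"
  unfolding Fil_def using less_Suc_eq by auto

lemma Qb_Fil: assumes "x \<in> Fil a" "y \<in> Fil a" shows "Qb x y \<in> Fil (Suc a)"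
  using Qb_trunc[of x 0 a y 0] assms by (simp add: Qb_00)

lemma Qb_Fil2: "Qb x y \<in> Fil 2"
  using Qb_Fil[of x 1 y] by (simp add: numeral_2_eq_2)

lemma layer_bch: "pr j (bch br s x y) = pr j x + pr j y + pr j (Qb x y)"
  by (simp add: bch_split layer_add)

lemma layer1_bch: "pr 1 (bch br s x y) = pr 1 x + pr 1 y"
  using Fil_layer[OF Qb_Fil2, of 1 x y] by (simp add: layer_bch)

lemma Qb_layer_eq: assumes "x - x' \<in> Fil j" "y - y' \<in> Fil j" shows "pr j (Qb x y) = pr j (Qb x' y')"
proof -
  have "pr j (Qb x y - Qb x' y') = 0" using Qb_trunc[OF assms] Fil_Suc by blast
  then show ?thesis by (simp add: layer_diff)
qed

lemma bch_Fil: assumes "x \<in> Fil a" "y \<in> Fil a"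
  shows "bch br s x y \<in> Fil a" "pr a (bch br s x y) = pr a x + pr a y"
proof -
  have q: "Qb x y \<in> Fil (Suc a)" using Qb_Fil[OF assms] .
  then show "bch br s x y \<in> Fil a" using assms Fil_Suc by (simp add: bch_split Fil_add)
  show "pr a (bch br s x y) = pr a x + pr a y" using q Fil_Suc by (simp add: layer_bch)
qed

lemma bch_inj: assumes "bch br s u y = bch br s u y'" shows "y = y'"
proof -
  have "y - y' \<in> Fil j" for j
  proof (induction j)
    case 0 then show ?case by simp
  next
    case (Suc j)
    have "pr j (Qb u y) = pr j (Qb u y')" by (rule Qb_layer_eq) (use Suc Fil_0 in auto)
    then have "pr j y = pr j y'" using arg_cong[OF assms, of "pr j"] by (simp add: layer_bch)
    then show ?case using Suc Fil_Suc by (simp add: layer_diff)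
  qed
  then have "y - y' \<in> Fil (Suc s)" .
  then show ?thesis using Fil_big[of "Suc s"] by simp
qed

fun solk :: "nat \<Rightarrow> 'a \<Rightarrow> 'a \<Rightarrow> 'a" where
  "solk 0 p h = 0"
| "solk (Suc j) p h = solk j p h + pr (Suc j) (h - bch br s p (solk j p h))"

lemma solk_prop: "i \<le> j \<Longrightarrow> pr i (bch br s p (solk j p h)) = pr i h"
proof (induction j arbitrary: i)
  case 0 then show ?case by (simp add: layer_out)
next
  case (Suc j)
  define c where "c = solk j p h"
  define \<delta> where "\<delta> = pr (Suc j) (h - bch br s p c)"
  have sc: "solk (Suc j) p h = c + \<delta>" by (simp add: c_def \<delta>_def)
  have dV: "\<delta> \<in> V (Suc j)" unfolding \<delta>_def by (rule layer_in)
  have dF: "\<delta> \<in> Fil i" using V_Fil[OF dV] Suc.prems by simp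
  have q: "pr i (Qb p (c + \<delta>)) = pr i (Qb p c)"
    by (rule Qb_layer_eq) (use dF Fil_0 in auto)
  have "pr i (bch br s p (c + \<delta>)) = pr i (bch br s p c) + pr i \<delta>"
    by (simp add: layer_bch layer_add q)
  also have "\<dots> = pr i h"
  proof (cases "i \<le> j")
    case True
    then have "pr i \<delta> = 0" using layer_of_V[OF dV] by simp
    then show ?thesis using Suc.IH[OF True] by (simp add: c_def)
  next
    case False
    then have "i = Suc j" using Suc.prems by simp
    then show ?thesis using layer_of_V[OF dV] by (simp add: \<delta>_def layer_diff)
  qed
  finally show ?case using sc by simp
qed

definition sol :: "'a \<Rightarrow> 'a \<Rightarrow> 'a" where "sol p h = solk s p h"

lemma bch_sol: "bch br s p (sol p h) = h"
  unfolding sol_def by (rule eq_layers) (simp add: solk_prop)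

lemma sol_unique: "bch br s p y = h \<Longrightarrow> y = sol p h"
  by (metis bch_inj bch_sol)

end

fun nbrD :: "('a::monoid_add \<Rightarrow> 'a \<Rightarrow> 'a) \<Rightarrow> ('a \<times> 'a) list \<Rightarrow> 'a" where
  "nbrD br [] = 0"
| "nbrD br [p] = snd p"
| "nbrD br (p # q # l) = br (snd p) (nbr br (fst q # map fst l)) + br (fst p) (nbrD br (q # l))"

fun sg :: "bool \<Rightarrow> real" where "sg b = (if b then 1 else -1)"

fun kap :: "bool list \<Rightarrow> real" where
  "kap [] = 0"
| "kap [b] = (if b then 1 else 0)"
| "kap (b # c # l) = (if b \<and> l = [] then - sg c else 0) + sg b * kap (c # l)"

abbreviation bw :: "(nat \<times> nat) list \<Rightarrow> bool list" where "bw rs \<equiv> dynkin_word False True rs"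

context ga begin

lemma nbr_deriv:
  fixes L :: "(('x::real_normed_vector \<Rightarrow> 'a) \<times> ('x \<Rightarrow> 'a)) list"
  assumes "\<forall>p\<in>set L. (fst p has_derivative snd p) (at z)"
  shows "((\<lambda>y. nbr br (map (\<lambda>p. fst p y) L)) has_derivative
          (\<lambda>e. nbrD br (map (\<lambda>p. (fst p z, snd p e)) L))) (at z)"
  using assms
proof (induction L rule: induct_list012)
  case 1 then show ?case by simp
next
  case (2 p) then show ?case by simp
next
  case (3 p q l)
  have h1: "(fst p has_derivative snd p) (at z)" using "3.prems" by simp
  have h2: "((\<lambda>y. nbr br (map (\<lambda>p. fst p y) (q # l))) has_derivative
          (\<lambda>e. nbrD br (map (\<lambda>p. (fst p z, snd p e)) (q # l)))) (at z)"
    using "3.IH"(2) "3.prems" by simp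
  have "((\<lambda>y. br (fst p y) (nbr br (map (\<lambda>p. fst p y) (q # l)))) has_derivative
     (\<lambda>e. br (fst p z) (nbrD br (map (\<lambda>p. (fst p z, snd p e)) (q # l))) +
          br (snd p e) (nbr br (map (\<lambda>p. fst p z) (q # l))))) (at z)"
    by (rule bounded_bilinear.FDERIV[OF bbil h1 h2])
  then show ?case by (simp add: o_def add.commute)
qed

lemma nbrD_zero: "\<forall>p\<in>set l. fst p = 0 \<Longrightarrow> nbrD br l = (if length l = 1 then snd (hd l) else 0)"
proof (induction l rule: induct_list012)
  case (3 p q l)
  have "nbrD br (q # l) = 0 \<or> length (q # l) = 1" using 3 by auto
  then show ?case using "3.prems" nbr_zero_letters[of "fst q # map fst l"]
    by (auto simp: bilinear_lzero[OF bil] bilinear_rzero[OF bil])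
qed auto

lemma bch_deriv:
  "((\<lambda>q. bch br s (fst q) (snd q)) has_derivative
    (\<lambda>e. \<Sum>n=1..s. cn n *\<^sub>R (\<Sum>rs\<in>dynkin_tuples s n. dynkin_coeff rs *\<^sub>R
        nbrD br (dynkin_word (a, fst e) (b, snd e) rs)))) (at (a, b))"
proof -
  have d: "((\<lambda>q. nbr br (dynkin_word (fst q) (snd q) rs)) has_derivative
       (\<lambda>e. nbrD br (dynkin_word (a, fst e) (b, snd e) rs))) (at (a, b))" for rs
  proof -
    let ?L = "dynkin_word (fst :: 'a \<times> 'a \<Rightarrow> 'a, fst) (snd, snd) rs"
    have df: "(fst has_derivative fst) (at (a, b))" "(snd has_derivative snd) (at (a, b))"
      by (auto intro!: bounded_linear_imp_has_derivative bounded_linear_fst bounded_linear_snd)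
    have "\<forall>p\<in>set ?L. (fst p has_derivative snd p) (at (a, b))"
      using set_dw[of "(fst :: 'a \<times> 'a \<Rightarrow> 'a, fst :: 'a \<times> 'a \<Rightarrow> 'a)" "(snd, snd)" rs] df
      by auto
    from nbr_deriv[OF this] show ?thesis by (simp add: map_dw)
  qed
  show ?thesis unfolding bch_def
    by (intro has_derivative_sum has_derivative_scaleR_right d)
qed

lemma bch_deriv0:
  "((\<lambda>q. bch br s (fst q) (snd q)) has_derivative (\<lambda>e. fst e + snd e)) (at (0, 0))"
proof -
  define H where "H l = nbrD br (map (\<lambda>w. (0::'a, w)) l)" for l
  have eq: "nbrD br (dynkin_word (0, fst e) (0, snd e) rs) = H (dynkin_word (fst e) (snd e) rs)" for e rs
    by (simp add: H_def map_dw)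
  have "(\<Sum>n=1..s. cn n *\<^sub>R (\<Sum>rs\<in>dynkin_tuples s n. dynkin_coeff rs *\<^sub>R H (dynkin_word (fst e) (snd e) rs)))
       = H [fst e] + H [snd e]" for e
    by (rule LEN1[OF s_ge1]) (simp add: H_def nbrD_zero)
  then show ?thesis using bch_deriv[of 0 0] by (simp add: eq H_def)
qed

lemma bch_cont: "continuous_on UNIV (\<lambda>q. bch br s (fst q) (snd q))"
proof -
  have "isCont (\<lambda>q. bch br s (fst q) (snd q)) q" for q
    using bch_deriv[of "fst q" "snd q"] has_derivative_continuous by fastforce
  then show ?thesis by (simp add: continuous_at_imp_continuous_on)
qed

lemma tendsto_bch: "(f \<longlongrightarrow> a) F \<Longrightarrow> (g \<longlongrightarrow> b) F \<Longrightarrow> ((\<lambda>x. bch br s (f x) (g x)) \<longlongrightarrow> bch br s a b) F"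
proof -
  assume f: "(f \<longlongrightarrow> a) F" and g: "(g \<longlongrightarrow> b) F"
  have "isCont (\<lambda>q. bch br s (fst q) (snd q)) (a, b)"
    using bch_cont by (simp add: continuous_on_eq_continuous_at)
  from isCont_tendsto_compose[OF this tendsto_Pair[OF f g]] show ?thesis by simp
qed

lemma bl_layer: "bounded_linear (pr i)"
  using linear_layer linear_conv_bounded_linear by blast

lemma tendsto_layer: "(f \<longlongrightarrow> a) F \<Longrightarrow> ((\<lambda>x. pr i (f x)) \<longlongrightarrow> pr i a) F"
  by (rule bounded_linear.tendsto[OF bl_layer])

lemma tendsto_solk: "(f \<longlongrightarrow> a) F \<Longrightarrow> (g \<longlongrightarrow> b) F \<Longrightarrow> ((\<lambda>x. solk j (f x) (g x)) \<longlongrightarrow> solk j a b) F"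
  by (induction j) (auto intro!: tendsto_add tendsto_layer tendsto_diff tendsto_bch)

lemma tendsto_sol: "(f \<longlongrightarrow> a) F \<Longrightarrow> (g \<longlongrightarrow> b) F \<Longrightarrow> ((\<lambda>x. sol (f x) (g x)) \<longlongrightarrow> sol a b) F"
  unfolding sol_def by (rule tendsto_solk)

lemma nbr_pmX: "nbr br (map (\<lambda>b. if b then X else - X) bs) =
   (if length bs = 1 then sg (hd bs) *\<^sub>R X else 0)"
proof (cases "2 \<le> length bs")
  case True
  have "nbr br (map (\<lambda>b. if b then X else - X) bs) = 0"
  proof (rule nbr_mult[of _ X])
    show "2 \<le> length (map (\<lambda>b. if b then X else - X) bs)" using True by simp
    show "\<forall>w\<in>set (map (\<lambda>b. if b then X else - X) bs). \<exists>c. w = c *\<^sub>R X"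
    proof
      fix w assume "w \<in> set (map (\<lambda>b. if b then X else - X) bs)"
      then have "w = 1 *\<^sub>R X \<or> w = (-1) *\<^sub>R X" by auto
      then show "\<exists>c. w = c *\<^sub>R X" by blast
    qed
  qed
  then show ?thesis using True by simp
next
  case False
  show ?thesis
  proof (cases bs)
    case Nil then show ?thesis by simp
  next
    case (Cons b l)
    then have "l = []" using False by (cases l) auto
    then show ?thesis using Cons by auto
  qed
qed

lemma nbrD_kap: "nbrD br (map (\<lambda>b. if b then (X, e) else (- X, 0)) bs) =
   kap bs *\<^sub>R (br X ^^ (length bs - 1)) e"
proof (induction bs rule: induct_list012)
  case (3 b c l)
  define f where "f = (\<lambda>b. if b then (X, e) else (- X, 0))"
  have m: "fst (f c) # map fst (map f l) = map (\<lambda>b. if b then X else - X) (c # l)"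
    by (induction l) (auto simp: f_def)
  have n1: "nbr br (fst (f c) # map fst (map f l)) = (if l = [] then sg c *\<^sub>R X else 0)"
    unfolding m using nbr_pmX[where bs="c # l"] by auto
  have e0: "nbrD br (map f (b # c # l)) = br (snd (f b)) (nbr br (fst (f c) # map fst (map f l)))
     + br (fst (f b)) (nbrD br (map f (c # l)))" by simp
  have t1: "br (snd (f b)) (if l = [] then sg c *\<^sub>R X else 0)
      = (if b \<and> l = [] then - sg c else 0) *\<^sub>R (br X ^^ (length (b # c # l) - 1)) e"
    using antisym[of e X]
    by (auto simp: f_def bilinear_lzero[OF bil] bilinear_rzero[OF bil] bilinear_rmul[OF bil])
  have t2: "br (fst (f b)) (kap (c # l) *\<^sub>R (br X ^^ (length (c # l) - 1)) e)
      = (sg b * kap (c # l)) *\<^sub>R (br X ^^ (length (b # c # l) - 1)) e"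
    by (auto simp: f_def bilinear_rmul[OF bil] bilinear_lneg[OF bil])
  have "nbrD br (map f (b # c # l)) = kap (b # c # l) *\<^sub>R (br X ^^ (length (b # c # l) - 1)) e"
    unfolding e0 n1 t1 "3.IH"(2)[folded f_def] t2 by (simp add: scaleR_add_left)
  then show ?case by (simp add: f_def)
qed auto

lemma bch_derivX:
  "((\<lambda>Y. bch br s (- X) (X + Y)) has_derivative
    (\<lambda>e. \<Sum>n=1..s. cn n *\<^sub>R (\<Sum>rs\<in>dynkin_tuples s n. dynkin_coeff rs *\<^sub>R
        (kap (bw rs) *\<^sub>R (br X ^^ (tot rs - 1)) e)))) (at 0)"
proof -
  have g: "((\<lambda>Y. (- X, X + Y)) has_derivative (\<lambda>e. (0, e))) (at 0)"
    by (auto intro!: derivative_eq_intros)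
  have c: "((\<lambda>Y. bch br s (fst (- X, X + Y)) (snd (- X, X + Y))) has_derivative
     (\<lambda>e. (\<lambda>e. \<Sum>n=1..s. cn n *\<^sub>R (\<Sum>rs\<in>dynkin_tuples s n. dynkin_coeff rs *\<^sub>R
        nbrD br (dynkin_word (- X, fst e) (X, snd e) rs))) (0, e))) (at 0)"
    using has_derivative_compose[OF g bch_deriv[of "- X" "X + 0"]] by simp
  have w: "dynkin_word (- X, 0) (X, e) rs = map (\<lambda>b. if b then (X, e) else (- X, 0)) (bw rs)" for e rs
    by (simp add: map_dw)
  show ?thesis using c by (simp add: w nbrD_kap length_dw)
qed

end

definition U :: "nat \<Rightarrow> nat \<Rightarrow> (nat \<times> nat) list set" where
  "U n m = {rs. length rs = n \<and> (\<forall>p\<in>set rs. 0 < fst p + snd p) \<and> tot rs = m}"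

definition Bl :: "nat \<Rightarrow> (nat \<times> nat) set" where
  "Bl m = {p. 0 < fst p + snd p \<and> fst p + snd p \<le> m}"

lemma finite_U: "finite (U n m)"
proof -
  have "U n m \<subseteq> dynkin_tuples m n" unfolding U_def dt_alt by auto
  then show ?thesis using finite_dt finite_subset by blast
qed

lemma finite_Bl: "finite (Bl m)"
proof -
  have "Bl m \<subseteq> {0..m} \<times> {0..m}" unfolding Bl_def by auto
  then show ?thesis using finite_subset by blast
qed

lemma U0: "U 0 m = (if m = 0 then {[]} else {})"
  unfolding U_def by auto

lemma SPLIT: "(\<Sum>rs\<in>U (Suc n) m. F rs) =
   (\<Sum>p\<in>Bl m. \<Sum>pre\<in>U n (m - (fst p + snd p)). F (pre @ [p]))"
proof -
  define S where "S = Sigma (Bl m) (\<lambda>p. U n (m - (fst p + snd p)))"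
  define g where "g = (\<lambda>(p::nat\<times>nat, pre). pre @ [p])"
  have fS: "finite S" unfolding S_def using finite_Bl finite_U by auto
  have inj: "inj_on g S" unfolding g_def inj_on_def by auto
  have img: "g ` S = U (Suc n) m"
  proof
    show "g ` S \<subseteq> U (Suc n) m"
      unfolding S_def g_def U_def Bl_def by (auto simp: tot_append)
    show "U (Suc n) m \<subseteq> g ` S"
    proof
      fix rs assume rs: "rs \<in> U (Suc n) m"
      then have ne: "rs \<noteq> []" unfolding U_def by auto
      define p where "p = last rs"
      define pre where "pre = butlast rs"
      have e: "rs = pre @ [p]" using ne by (simp add: p_def pre_def)
      have "(p, pre) \<in> S" using rs unfolding S_def U_def Bl_def e by (auto simp: tot_append)
      then show "rs \<in> g ` S" unfolding g_def e by force
    qed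
  qed
  have "(\<Sum>rs\<in>U (Suc n) m. F rs) = (\<Sum>q\<in>S. F (g q))"
    using sum.reindex[OF inj, of F] img by simp
  also have "\<dots> = (\<Sum>(p,pre)\<in>S. F (pre @ [p]))"
    by (intro sum.cong refl) (auto simp: g_def)
  also have "\<dots> = (\<Sum>p\<in>Bl m. \<Sum>pre\<in>U n (m - (fst p + snd p)). F (pre @ [p]))"
    unfolding S_def by (rule sum.Sigma[symmetric]) (use finite_Bl finite_U in auto)
  finally show ?thesis .
qed

definition w :: "nat \<times> nat \<Rightarrow> real" where
  "w p = (-1) ^ fst p / (fact (fst p) * fact (snd p))"

definition P :: "(nat \<times> nat) list \<Rightarrow> real" where
  "P rs = prod_list (map w rs)"

lemma P_snoc: "P (pre @ [p]) = P pre * w p" by (simp add: P_def)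

lemma DIAG: assumes "1 \<le> k"
  shows "(\<Sum>p\<in>Bl m. if fst p + snd p = k then w p else 0) = (if k \<le> m then 0 else 0)"
proof -
  have "(\<Sum>p\<in>Bl m. if fst p + snd p = k then w p else 0) = (\<Sum>p\<in>{p\<in>Bl m. fst p + snd p = k}. w p)"
    by (simp add: sum.inter_filter[OF finite_Bl])
  also have "\<dots> = 0"
  proof (cases "k \<le> m")
    case False
    then have e: "{p\<in>Bl m. fst p + snd p = k} = {}" unfolding Bl_def by auto
    show ?thesis by (simp only: e sum.empty)
  next
    case True
    have eq: "{p\<in>Bl m. fst p + snd p = k} = (\<lambda>r. (r, k - r)) ` {..k}"
      unfolding Bl_def using True assms by force
    have inj: "inj_on (\<lambda>r. (r, k - r)) {..k}" by (auto simp: inj_on_def)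
    have "(\<Sum>p\<in>{p\<in>Bl m. fst p + snd p = k}. w p) = (\<Sum>r\<le>k. w (r, k - r))"
      unfolding eq by (simp add: sum.reindex[OF inj])
    also have "\<dots> = (\<Sum>r\<le>k. (-1) ^ r * of_nat (k choose r)) / fact k"
      unfolding sum_divide_distrib
      by (intro sum.cong refl) (simp add: w_def binomial_fact)
    also have "\<dots> = 0" using choose_alternating_sum[of k] assms by simp
    finally show ?thesis .
  qed
  finally show ?thesis by simp
qed

lemma S_val: "(\<Sum>rs\<in>U n k. P rs) = (if n = 0 \<and> k = 0 then 1 else 0)"
proof (induction n arbitrary: k)
  case 0 then show ?case by (simp add: U0 P_def)
next
  case (Suc n)
  have "(\<Sum>rs\<in>U (Suc n) k. P rs) = (\<Sum>p\<in>Bl k. w p * (\<Sum>pre\<in>U n (k - (fst p + snd p)). P pre))"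
    unfolding SPLIT P_snoc by (simp add: sum_distrib_left mult.commute)
  also have "\<dots> = (\<Sum>p\<in>Bl k. if n = 0 then (if fst p + snd p = k then w p else 0) else 0)"
    unfolding Suc.IH by (intro sum.cong refl) (auto simp: Bl_def)
  also have "\<dots> = 0"
  proof (cases "n = 0")
    case True
    then show ?thesis
    proof (cases "k = 0")
      case True
      then have "Bl k = {}" unfolding Bl_def by auto
      then show ?thesis by simp
    next
      case False
      then show ?thesis using DIAG[of k k] \<open>n = 0\<close> by simp
    qed
  qed simp
  finally show ?case by simp
qed


fun mu0 :: "bool list \<Rightarrow> real" where
  "mu0 [True] = 1"
| "mu0 (True # False # l) = 1"
| "mu0 (False # True # l) = -1"
| "mu0 l = 0"

lemma mu0_app: "mu0 (x # y # zs @ [b]) = mu0 (x # y # zs)"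
  by (cases x; cases y) auto

lemma kap_mu: "kap l = (-1) ^ length (filter Not l) * mu0 (rev l)"
proof (induction l rule: induct_list012)
  case (3 b c l)
  show ?case
  proof (cases "l = []")
    case True
    then show ?thesis by (cases b; cases c) auto
  next
    case False
    obtain x ys where rl: "rev l = x # ys" using False by (cases "rev l") auto
    define y where "y = hd (ys @ [c])"
    define zs where "zs = tl (ys @ [c])"
    have r: "rev (c # l) = x # y # zs" using rl unfolding y_def zs_def by (cases ys) auto
    have "rev (b # c # l) = x # y # (zs @ [b])" using r by simp
    then have m: "mu0 (rev (b # c # l)) = mu0 (rev (c # l))" using r mu0_app by simp
    have k: "kap (b # c # l) = sg b * kap (c # l)" using False by (cases l) auto
    show ?thesis unfolding m k "3.IH"(2) by (cases b) auto
  qed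
qed auto

lemma cntF_bw: "length (filter Not (bw rs)) = sum_list (map fst rs)"
  by (induction rs) (auto simp: filter_replicate)

lemma P_alt: "P rs = (-1) ^ sum_list (map fst rs) / prod_list (map (\<lambda>p. fact (fst p) * fact (snd p)) rs)"
  by (induction rs) (auto simp: P_def w_def power_add)

lemma kap_W: "kap (bw rs) / prod_list (map (\<lambda>p. fact (fst p) * fact (snd p)) rs) = P rs * mu0 (rev (bw rs))"
  unfolding kap_mu cntF_bw P_alt by simp

lemma bw_nil: "\<forall>q\<in>set pre. 0 < fst q + snd q \<Longrightarrow> bw pre = [] \<longleftrightarrow> pre = []"
  by (induction pre) auto

lemma rev_bw_last: assumes "pre \<noteq> []" "\<forall>q\<in>set pre. 0 < fst q + snd q"
  shows "\<exists>tl. rev (bw pre) = (snd (last pre) \<noteq> 0) # tl"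
proof -
  obtain pre2 r t where e: "pre = pre2 @ [(r, t)]" using assms(1)
    by (metis rev_exhaust surj_pair)
  have "0 < r + t" using assms(2) e by auto
  have rv: "rev (bw pre) = replicate t True @ replicate r False @ rev (bw pre2)"
    using e by (simp add: dw_append)
  show ?thesis
  proof (cases t)
    case 0
    then obtain r' where "r = Suc r'" using \<open>0 < r + t\<close> by (cases r) auto
    then show ?thesis using rv e 0 by auto
  next
    case (Suc t')
    then show ?thesis using rv e by auto
  qed
qed

definition Ac :: "nat \<times> nat \<Rightarrow> real" where "Ac p = (if snd p = 1 \<and> 1 \<le> fst p then 1 else 0)"
definition Bc :: "nat \<times> nat \<Rightarrow> real" where "Bc p = (if p = (0,1) then 1 else 0)"
definition Cc :: "nat \<times> nat \<Rightarrow> real" where "Cc p = (if p = (1,0) then -1 else 0)"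
definition ind2 :: "(nat \<times> nat) list \<Rightarrow> real" where
  "ind2 pre = (if pre \<noteq> [] \<and> snd (last pre) \<noteq> 0 then 1 else 0)"

lemma MU: assumes "0 < fst p + snd p" "\<forall>q\<in>set pre. 0 < fst q + snd q"
  shows "mu0 (rev (bw (pre @ [p]))) = Ac p + Bc p * (1 - ind2 pre) + Cc p * ind2 pre"
proof -
  obtain r t where p: "p = (r, t)" by (cases p)
  have rv: "rev (bw (pre @ [p])) = replicate t True @ replicate r False @ rev (bw pre)"
    using p by (simp add: dw_append)
  consider "2 \<le> t" | "t = 1" "1 \<le> r" | "t = 1" "r = 0" | "t = 0" "2 \<le> r" | "t = 0" "r = 1"
    using assms(1) p by fastforce
  then show ?thesis
  proof cases
    case 1
    then obtain t' where "t = Suc (Suc t')" by (metis add_2_eq_Suc le_Suc_ex)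
    then show ?thesis using rv p by (simp add: Ac_def Bc_def Cc_def)
  next
    case 2
    then obtain r' where "r = Suc r'" by (cases r) auto
    then show ?thesis using rv p 2 by (simp add: Ac_def Bc_def Cc_def)
  next
    case 3
    show ?thesis
    proof (cases "pre = []")
      case True then show ?thesis using rv p 3 by (simp add: Ac_def Bc_def Cc_def ind2_def)
    next
      case False
      then obtain tl where "rev (bw pre) = (snd (last pre) \<noteq> 0) # tl"
        using rev_bw_last assms(2) by blast
      then show ?thesis using rv p 3 False by (simp add: Ac_def Bc_def Cc_def ind2_def)
    qed
  next
    case 4
    then obtain r' where "r = Suc (Suc r')" by (metis add_2_eq_Suc le_Suc_ex)
    then show ?thesis using rv p 4 by (simp add: Ac_def Bc_def Cc_def)
  next
    case 5
    show ?thesis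
    proof (cases "pre = []")
      case True then show ?thesis using rv p 5 by (simp add: Ac_def Bc_def Cc_def ind2_def)
    next
      case False
      then obtain tl where "rev (bw pre) = (snd (last pre) \<noteq> 0) # tl"
        using rev_bw_last assms(2) by blast
      then show ?thesis using rv p 5 False by (simp add: Ac_def Bc_def Cc_def ind2_def)
    qed
  qed
qed


lemma U_nz: "rs \<in> U n m \<Longrightarrow> \<forall>q\<in>set rs. 0 < fst q + snd q" unfolding U_def by auto

lemma S2_val: "(\<Sum>rs\<in>U n k. P rs * ind2 rs) = (if n = 1 \<and> 1 \<le> k then - w (k, 0) else 0)"
proof (cases n)
  case 0 then show ?thesis by (simp add: U0 ind2_def)
next
  case (Suc n')
  have "(\<Sum>rs\<in>U (Suc n') k. P rs * ind2 rs) =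
     (\<Sum>p\<in>Bl k. (w p * (if snd p \<noteq> 0 then 1 else 0)) * (\<Sum>pre\<in>U n' (k - (fst p + snd p)). P pre))"
    unfolding SPLIT P_snoc sum_distrib_left by (intro sum.cong refl) (simp add: ind2_def)
  also have "\<dots> = (\<Sum>p\<in>Bl k. if n' = 0 then ((if fst p + snd p = k then w p else 0) -
        (if p = (k, 0) then w p else 0)) else 0)"
    unfolding S_val by (intro sum.cong refl) (auto simp: Bl_def)
  also have "\<dots> = (if n' = 0 \<and> 1 \<le> k then - w (k, 0) else 0)"
  proof (cases "n' = 0")
    case True
    show ?thesis
    proof (cases "k = 0")
      case True then have "Bl k = {}" unfolding Bl_def by auto
      then show ?thesis using \<open>k = 0\<close> by simp
    next
      case False
      have "(k, 0) \<in> Bl k" using False unfolding Bl_def by auto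
      then have "(\<Sum>p\<in>Bl k. if p = (k, 0) then w p else 0) = w (k, 0)"
        by (simp add: sum.delta[OF finite_Bl])
      then show ?thesis using DIAG[of k k] True False by (simp add: sum_subtractf)
    qed
  qed simp
  finally show ?thesis using Suc by simp
qed

definition Kv :: "nat \<Rightarrow> nat \<Rightarrow> real" where
  "Kv n m = (\<Sum>rs\<in>U n m. P rs * mu0 (rev (bw rs)))"

lemma sum_lin_aux: fixes f g :: "'b \<Rightarrow> real" shows "(\<Sum>x\<in>A. c * (a * f x + b * (f x - g x) + d * g x)) =
  c * (a * sum f A + b * (sum f A - sum g A) + d * sum g A)"
proof -
  have "(\<Sum>x\<in>A. a * f x + b * (f x - g x) + d * g x) =
     (\<Sum>x\<in>A. a * f x) + (\<Sum>x\<in>A. b * (f x - g x)) + (\<Sum>x\<in>A. d * g x)"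
    by (simp add: sum.distrib)
  also have "\<dots> = a * sum f A + b * (sum f A - sum g A) + d * sum g A"
    by (simp add: sum_distrib_left[symmetric] sum_subtractf)
  finally show ?thesis by (simp add: sum_distrib_left[symmetric])
qed

lemma K_split: "Kv (Suc n) m = (\<Sum>p\<in>Bl m. w p * (Ac p * (\<Sum>pre\<in>U n (m - (fst p + snd p)). P pre)
     + Bc p * ((\<Sum>pre\<in>U n (m - (fst p + snd p)). P pre) - (\<Sum>pre\<in>U n (m - (fst p + snd p)). P pre * ind2 pre))
     + Cc p * (\<Sum>pre\<in>U n (m - (fst p + snd p)). P pre * ind2 pre)))"
  unfolding Kv_def SPLIT
proof (intro sum.cong refl)
  fix p assume p: "p \<in> Bl m"
  have "(\<Sum>pre\<in>U n (m - (fst p + snd p)). P (pre @ [p]) * mu0 (rev (bw (pre @ [p])))) =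
    (\<Sum>pre\<in>U n (m - (fst p + snd p)). w p * (Ac p * P pre + Bc p * (P pre - P pre * ind2 pre) + Cc p * (P pre * ind2 pre)))"
  proof (intro sum.cong refl)
    fix pre assume "pre \<in> U n (m - (fst p + snd p))"
    then have nz: "\<forall>q\<in>set pre. 0 < fst q + snd q" by (rule U_nz)
    have "0 < fst p + snd p" using p unfolding Bl_def by simp
    then have mu: "mu0 (rev (bw (pre @ [p]))) = Ac p + Bc p * (1 - ind2 pre) + Cc p * ind2 pre"
      by (rule MU[of p pre, OF _ nz])
    show "P (pre @ [p]) * mu0 (rev (bw (pre @ [p]))) =
       w p * (Ac p * P pre + Bc p * (P pre - P pre * ind2 pre) + Cc p * (P pre * ind2 pre))"
      unfolding P_snoc mu by (simp add: algebra_simps)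
  qed
  then show "(\<Sum>pre\<in>U n (m - (fst p + snd p)). P (pre @ [p]) * mu0 (rev (bw (pre @ [p])))) =
    w p * (Ac p * (\<Sum>pre\<in>U n (m - (fst p + snd p)). P pre)
     + Bc p * ((\<Sum>pre\<in>U n (m - (fst p + snd p)). P pre) - (\<Sum>pre\<in>U n (m - (fst p + snd p)). P pre * ind2 pre))
     + Cc p * (\<Sum>pre\<in>U n (m - (fst p + snd p)). P pre * ind2 pre))"
    using sum_lin_aux[of "w p" "Ac p" P "Bc p" "\<lambda>pre. P pre * ind2 pre" "Cc p" "U n (m - (fst p + snd p))"]
    by simp
qed

lemma K_val: assumes "1 \<le> m" "1 \<le> n"
  shows "Kv n m = (if n = 1 then (-1) ^ (m - 1) / fact (m - 1) else 0)"
proof -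
  obtain n' where n: "n = Suc n'" using assms by (cases n) auto
  show ?thesis
  proof (cases "n' = 0")
    case True
    have "Kv n m = (\<Sum>p\<in>Bl m. w p * (Ac p + Bc p) * (if fst p + snd p = m then 1 else 0))"
      unfolding n K_split S_val S2_val using True by (intro sum.cong refl) (auto simp: Bl_def algebra_simps)
    also have "\<dots> = (-1) ^ (m - 1) / fact (m - 1)"
    proof (cases "m = 1")
      case True
      have "(\<Sum>p\<in>Bl m. w p * (Ac p + Bc p) * (if fst p + snd p = m then 1 else 0))
          = (\<Sum>p\<in>Bl m. if p = (0, 1) then 1 else 0)"
        using True by (intro sum.cong refl) (auto simp: Ac_def Bc_def w_def Bl_def)
      also have "\<dots> = 1"
      proof -
        have "(0, 1) \<in> Bl m" using True by (simp add: Bl_def)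
        then show ?thesis by (simp add: sum.delta[OF finite_Bl])
      qed
      finally show ?thesis using True by simp
    next
      case False
      have "(\<Sum>p\<in>Bl m. w p * (Ac p + Bc p) * (if fst p + snd p = m then 1 else 0))
          = (\<Sum>p\<in>Bl m. if p = (m - 1, 1) then (-1) ^ (m - 1) / fact (m - 1) else 0)"
        using False assms(1) by (intro sum.cong refl) (auto simp: Ac_def Bc_def w_def Bl_def)
      also have "\<dots> = (-1) ^ (m - 1) / fact (m - 1)"
      proof -
        have "(m - 1, 1) \<in> Bl m" using assms(1) by (simp add: Bl_def)
        then show ?thesis by (simp add: sum.delta[OF finite_Bl])
      qed
      finally show ?thesis .
    qed
    finally show ?thesis using True n by simp
  next
    case False
    show ?thesis
    proof (cases "n' = 1")
      case True
      define c where "c = (if 2 \<le> m then w (m - 1, 0) else 0)"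
      have "Kv n m = (\<Sum>p\<in>Bl m. (if p = (0, 1) then c else 0) + (if p = (1, 0) then - c else 0))"
        unfolding n K_split S_val S2_val c_def using True
        by (intro sum.cong refl) (auto simp: Bl_def Ac_def Bc_def Cc_def w_def)
      also have "\<dots> = 0"
      proof -
        have "(0, 1) \<in> Bl m" "(1, 0) \<in> Bl m" using assms(1) by (auto simp: Bl_def)
        then show ?thesis by (simp add: sum.distrib sum.delta[OF finite_Bl])
      qed
      finally show ?thesis using n True by simp
    next
      case False
      have "Kv n m = (\<Sum>p\<in>Bl m. 0)"
        unfolding n K_split S_val S2_val using False \<open>n' \<noteq> 0\<close> by (intro sum.cong refl) auto
      then show ?thesis using n \<open>n' \<noteq> 0\<close> by simp
    qed
  qed
qed

theorem comb: assumes "1 \<le> m" "m \<le> s"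
  shows "(\<Sum>n=1..s. cn n * (\<Sum>rs\<in>{rs\<in>dynkin_tuples s n. tot rs = m}. dynkin_coeff rs * kap (bw rs)))
     = (-1) ^ (m - 1) / fact m"
proof -
  have U: "{rs\<in>dynkin_tuples s n. tot rs = m} = U n m" for n
    unfolding dt_alt U_def using assms by auto
  have inner: "(\<Sum>rs\<in>U n m. dynkin_coeff rs * kap (bw rs)) = Kv n m / m" for n
    unfolding Kv_def sum_divide_distrib
  proof (intro sum.cong refl)
    fix rs assume "rs \<in> U n m"
    then have t: "tot rs = m" unfolding U_def by auto
    have "dynkin_coeff rs * kap (bw rs) = (kap (bw rs) / prod_list (map (\<lambda>p. fact (fst p) * fact (snd p)) rs)) / m"
      unfolding dynkin_coeff_def using t by (simp add: tot_def)
    then show "dynkin_coeff rs * kap (bw rs) = P rs * mu0 (rev (bw rs)) / m" unfolding kap_W .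
  qed
  have "(\<Sum>n=1..s. cn n * (\<Sum>rs\<in>{rs\<in>dynkin_tuples s n. tot rs = m}. dynkin_coeff rs * kap (bw rs)))
      = (\<Sum>n=1..s. if n = 1 then (-1) ^ (m - 1) / fact (m - 1) / m else 0)"
    unfolding U inner using assms by (intro sum.cong refl) (auto simp: K_val)
  also have "\<dots> = (-1) ^ (m - 1) / fact (m - 1) / m" using assms by simp
  also have "\<dots> = (-1) ^ (m - 1) / fact m"
    using assms(1) fact_reduce[of m, where 'a=real] by (simp add: field_simps)
  finally show ?thesis .
qed

context ga begin

definition Psi :: "'a \<Rightarrow> 'a \<Rightarrow> 'a" where
  "Psi X e = (\<Sum>m=1..s. ((-1) ^ (m - 1) / fact m) *\<^sub>R (br X ^^ (m - 1)) e)"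

lemma Psi_deriv: "((\<lambda>Y. bch br s (- X) (X + Y)) has_derivative Psi X) (at 0)"
proof -
  have eq: "(\<Sum>n=1..s. cn n *\<^sub>R (\<Sum>rs\<in>dynkin_tuples s n. dynkin_coeff rs *\<^sub>R
        (kap (bw rs) *\<^sub>R (br X ^^ (tot rs - 1)) e))) = Psi X e" for e
  proof -
    define v where "v m = (br X ^^ (m - 1)) e" for m
    define a where "a n m = (\<Sum>rs\<in>{rs\<in>dynkin_tuples s n. tot rs = m}. dynkin_coeff rs * kap (bw rs))" for n m
    have inner: "(\<Sum>rs\<in>dynkin_tuples s n. dynkin_coeff rs *\<^sub>R (kap (bw rs) *\<^sub>R v (tot rs)))
        = (\<Sum>m=1..s. a n m *\<^sub>R v m)" if n: "n \<in> {1..s}" for n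
    proof -
      have sub: "tot ` dynkin_tuples s n \<subseteq> {1..s}"
      proof
        fix t assume "t \<in> tot ` dynkin_tuples s n"
        then obtain rs where rs: "rs \<in> dynkin_tuples s n" "t = tot rs" by auto
        then have "length rs = n" "\<forall>p\<in>set rs. 0 < fst p + snd p" "tot rs \<le> s" unfolding dt_alt by auto
        then show "t \<in> {1..s}" using tot_ge_len[of rs] n rs(2) by auto
      qed
      have "(\<Sum>rs\<in>dynkin_tuples s n. dynkin_coeff rs *\<^sub>R (kap (bw rs) *\<^sub>R v (tot rs)))
          = (\<Sum>m\<in>{1..s}. \<Sum>rs\<in>{rs\<in>dynkin_tuples s n. tot rs = m}. dynkin_coeff rs *\<^sub>R (kap (bw rs) *\<^sub>R v (tot rs)))"
        by (rule sum.group[symmetric, OF finite_dt _ sub]) simp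
      also have "\<dots> = (\<Sum>m=1..s. a n m *\<^sub>R v m)"
        unfolding a_def scaleR_sum_left
        by (intro sum.cong refl) auto
      finally show ?thesis .
    qed
    have "(\<Sum>n=1..s. cn n *\<^sub>R (\<Sum>rs\<in>dynkin_tuples s n. dynkin_coeff rs *\<^sub>R
        (kap (bw rs) *\<^sub>R (br X ^^ (tot rs - 1)) e))) = (\<Sum>n=1..s. cn n *\<^sub>R (\<Sum>m=1..s. a n m *\<^sub>R v m))"
      using inner unfolding v_def by (intro sum.cong refl) auto
    also have "\<dots> = (\<Sum>n=1..s. \<Sum>m=1..s. (cn n * a n m) *\<^sub>R v m)"
      by (simp add: scaleR_right.sum)
    also have "\<dots> = (\<Sum>m=1..s. \<Sum>n=1..s. (cn n * a n m) *\<^sub>R v m)"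
      by (rule sum.swap)
    also have "\<dots> = (\<Sum>m=1..s. (\<Sum>n=1..s. cn n * a n m) *\<^sub>R v m)"
      by (simp add: scaleR_sum_left)
    also have "\<dots> = (\<Sum>m=1..s. ((-1) ^ (m - 1) / fact m) *\<^sub>R v m)"
    proof (intro sum.cong refl)
      fix m assume m: "m \<in> {1..s}"
      have "(\<Sum>n=1..s. cn n * a n m) = (-1) ^ (m - 1) / fact m"
        unfolding a_def by (rule comb) (use m in auto)
      then show "(\<Sum>n=1..s. cn n * a n m) *\<^sub>R v m = ((-1) ^ (m - 1) / fact m) *\<^sub>R v m" by simp
    qed
    finally show ?thesis unfolding Psi_def v_def .
  qed
  show ?thesis using bch_derivX[of X] unfolding eq .
qed

lemma linear_br: "linear (br X)"
  using bil unfolding bilinear_def by blast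

lemma linear_adpow: "linear (br X ^^ k)"
proof (induction k)
  case 0 then show ?case by (simp add: linear_id[unfolded id_def])
next
  case (Suc k) then show ?case using linear_compose[OF Suc linear_br] by (simp add: o_def)
qed

lemma linear_Psi: "linear (Psi X)"
  by (rule linearI) (simp_all add: Psi_def linear_add[OF linear_adpow] linear_cmul[OF linear_adpow]
     scaleR_add_right sum.distrib scaleR_right.sum mult.commute)


lemma adpow_Fil: "e \<in> Fil a \<Longrightarrow> (br X ^^ k) e \<in> Fil (a + k)"
proof (induction k)
  case 0 then show ?case by simp
next
  case (Suc k)
  have "br X ((br X ^^ k) e) \<in> Fil (1 + (a + k))" using br_Fil[of X 1, OF _ Suc.IH[OF Suc.prems]] by simp
  then show ?case by simp
qed

lemma Psi_split: "Psi X e = e + (\<Sum>m=2..s. ((-1) ^ (m - 1) / fact m) *\<^sub>R (br X ^^ (m - 1)) e)"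
  unfolding Psi_def using sum.atLeast_Suc_atMost[OF s_ge1, of "\<lambda>m. ((-1) ^ (m - 1) / fact m) *\<^sub>R (br X ^^ (m - 1)) e"]
  by (simp add: numeral_2_eq_2)

definition Nn :: "'a \<Rightarrow> 'a \<Rightarrow> 'a" where "Nn X e = e - Psi X e"

lemma linear_Nn: "linear (Nn X)"
  unfolding Nn_def by (intro linear_compose_sub linear_ident linear_Psi)

lemma Nn_Fil: assumes "e \<in> Fil a" shows "Nn X e \<in> Fil (Suc a)"
proof -
  have "(\<Sum>m=2..s. ((-1) ^ (m - 1) / fact m) *\<^sub>R (br X ^^ (m - 1)) e) \<in> Fil (Suc a)"
  proof (intro Fil_sum Fil_scale)
    fix m assume "m \<in> {2..s}"
    then have "Suc a \<le> a + (m - 1)" by auto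
    then show "(br X ^^ (m - 1)) e \<in> Fil (Suc a)" using adpow_Fil[OF assms, where X=X and k="m - 1"] Fil_mono by blast
  qed
  then show ?thesis unfolding Nn_def Psi_split by (simp add: Fil_neg)
qed

lemma Nnpow_Fil: "(Nn X ^^ k) e \<in> Fil (Suc k)"
  by (induction k) (auto intro: Nn_Fil)

lemma Nnpow_big: "(Nn X ^^ Suc s) e = 0"
  using Nnpow_Fil[where X=X and k="Suc s" and e=e] Fil_big[of "Suc (Suc s)"] by simp

lemma linear_Nnpow: "linear (Nn X ^^ k)"
proof (induction k)
  case 0 then show ?case by (simp add: linear_id[unfolded id_def])
next
  case (Suc k) then show ?case using linear_compose[OF Suc linear_Nn] by (simp add: o_def)
qed

definition Tinv :: "'a \<Rightarrow> 'a \<Rightarrow> 'a" where "Tinv X e = (\<Sum>k\<le>s. (Nn X ^^ k) e)"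

lemma linear_Tinv: "linear (Tinv X)"
  by (rule linearI) (simp_all add: Tinv_def linear_add[OF linear_Nnpow] linear_cmul[OF linear_Nnpow]
     sum.distrib scaleR_right.sum)

lemma Psi_eq: "Psi X y = y - Nn X y" by (simp add: Nn_def)

lemma Psi_Tinv: "Psi X (Tinv X e) = e"
proof -
  have "Psi X (Tinv X e) = (\<Sum>k\<le>s. (Nn X ^^ k) e) - (\<Sum>k\<le>s. (Nn X ^^ Suc k) e)"
    unfolding Psi_eq Tinv_def linear_sum[OF linear_Nn] by simp
  also have "\<dots> = (\<Sum>k\<le>s. (Nn X ^^ k) e - (Nn X ^^ Suc k) e)" by (simp add: sum_subtractf)
  also have "\<dots> = e" using sum_telescope[of "\<lambda>k. (Nn X ^^ k) e" s] Nnpow_big by simp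
  finally show ?thesis .
qed

lemma Tinv_Psi: "Tinv X (Psi X e) = e"
proof -
  have "Tinv X (Psi X e) = (\<Sum>k\<le>s. (Nn X ^^ k) e - (Nn X ^^ Suc k) e)"
    unfolding Psi_eq Tinv_def linear_diff[OF linear_Nnpow] by (simp add: funpow_swap1)
  also have "\<dots> = e" using sum_telescope[of "\<lambda>k. (Nn X ^^ k) e" s] Nnpow_big by simp
  finally show ?thesis .
qed

lemma pr1_Tinv: "pr 1 (Tinv X e) = pr 1 e"
proof -
  have "pr 1 ((Nn X ^^ k) e) = (if k = 0 then pr 1 e else 0)" for k
  proof (cases k)
    case (Suc k')
    have "(Nn X ^^ k) e \<in> Fil 2" using Nnpow_Fil[where X=X and k=k and e=e] Fil_mono[of 2 "Suc k"] Suc by auto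
    then show ?thesis using Fil_layer Suc by fastforce
  qed simp
  then show ?thesis unfolding Tinv_def layer_sum by simp
qed

lemma layer_formula: assumes "e \<in> V 1" "2 \<le> i"
  shows "pr i (Tinv X e) = (\<Sum>n=2..s. ((-1) ^ n / fact n) *\<^sub>R pr i ((br X ^^ (n - 1)) (Tinv X e)))"
proof -
  define Y where "Y = Tinv X e"
  have "pr i (Psi X Y) = 0" using Psi_Tinv[of X e] layer_of_V[OF assms(1), of i] assms(2) by (simp add: Y_def)
  then have "pr i Y + (\<Sum>m=2..s. ((-1) ^ (m - 1) / fact m) *\<^sub>R pr i ((br X ^^ (m - 1)) Y)) = 0"
    unfolding Psi_split layer_add layer_sum layer_scale .
  then have "pr i Y = - (\<Sum>m=2..s. ((-1) ^ (m - 1) / fact m) *\<^sub>R pr i ((br X ^^ (m - 1)) Y))"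
    by (simp add: eq_neg_iff_add_eq_0)
  also have "\<dots> = (\<Sum>n=2..s. ((-1) ^ n / fact n) *\<^sub>R pr i ((br X ^^ (n - 1)) Y))"
    unfolding sum_negf[symmetric]
  proof (intro sum.cong refl)
    fix n assume "n \<in> {2..s}"
    then obtain n' where n: "n = Suc n'" by (cases n) auto
    show "- (((-1) ^ (n - 1) / fact n) *\<^sub>R pr i ((br X ^^ (n - 1)) Y)) =
        ((-1) ^ n / fact n) *\<^sub>R pr i ((br X ^^ (n - 1)) Y)"
      unfolding n by simp
  qed
  finally show ?thesis unfolding Y_def .
qed

end

context ga begin

lemma layer_dil: "pr k (dil V s r x) = r ^ k *\<^sub>R pr k x"
proof -
  have "pr k (dil V s r x) = (\<Sum>i=1..s. if i = k then r ^ i *\<^sub>R pr i x else 0)"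
    unfolding dil_def layer_sum layer_scale layer_layer by (intro sum.cong refl) auto
  also have "\<dots> = r ^ k *\<^sub>R pr k x"
    using layer_out[of k x] by (auto simp: sum.delta)
  finally show ?thesis .
qed

lemma dil_dil: "dil V s r (dil V s t x) = dil V s (r * t) x"
  by (rule eq_layers) (simp add: layer_dil power_mult_distrib)

lemma dil_1[simp]: "dil V s 1 x = x"
  by (rule eq_layers) (simp add: layer_dil)

lemma dil_0[simp]: "dil V s r 0 = 0"
  by (rule eq_layers) (simp add: layer_dil)

lemma dil_V: "v \<in> V k \<Longrightarrow> dil V s r v = r ^ k *\<^sub>R v"
  by (rule eq_layers) (simp add: layer_dil layer_scale layer_of_V)

lemma tendsto_dil0: "((\<lambda>r. dil V s r x) \<longlongrightarrow> 0) (at_right 0)"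
proof -
  have "((\<lambda>r. \<Sum>i=1..s. r ^ i *\<^sub>R pr i x) \<longlongrightarrow> (\<Sum>i=1..s. (0::real) ^ i *\<^sub>R pr i x)) (at_right 0)"
    by (intro tendsto_intros)
  moreover have "(\<Sum>i=1..s. (0::real) ^ i *\<^sub>R pr i x) = 0" by (intro sum.neutral) auto
  ultimately show ?thesis unfolding dil_def by simp
qed

definition Nh :: "'a \<Rightarrow> real" where "Nh x = (\<Sum>k=1..s. root k (norm (pr k x)))"

lemma Nh_nonneg: "0 \<le> Nh x"
  unfolding Nh_def by (intro sum_nonneg real_root_ge_zero) simp

lemma Nh_dil: assumes "0 < r" shows "Nh (dil V s r x) = r * Nh x"
proof -
  have "root k (norm (pr k (dil V s r x))) = r * root k (norm (pr k x))" if "k \<in> {1..s}" for k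
  proof -
    have "root k (norm (pr k (dil V s r x))) = root k (r ^ k * norm (pr k x))"
      using assms by (simp add: layer_dil)
    also have "\<dots> = root k (r ^ k) * root k (norm (pr k x))" by (rule real_root_mult)
    also have "root k (r ^ k) = r" using that assms by (simp add: real_root_power_cancel)
    finally show ?thesis .
  qed
  then show ?thesis unfolding Nh_def sum_distrib_left by (intro sum.cong refl) auto
qed

lemma Nh_0[simp]: "Nh 0 = 0" unfolding Nh_def by simp

lemma Nh_cont: "continuous_on UNIV Nh"
  unfolding Nh_def
  by (intro continuous_intros continuous_on_compose2[OF continuous_on_real_root[OF continuous_on_id]]
      linear_continuous_on bl_layer) auto

lemma layer_le_Nh: assumes "k \<in> {1..s}" shows "norm (pr k x) \<le> Nh x ^ k"
proof -
  have "root k (norm (pr k x)) \<le> Nh x"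
    unfolding Nh_def
    by (rule member_le_sum[of k "{1..s}" "\<lambda>k. root k (norm (pr k x))", OF assms])
       (auto simp: real_root_ge_zero)
  then have "root k (norm (pr k x)) ^ k \<le> Nh x ^ k"
    by (intro power_mono) (simp_all add: real_root_ge_zero)
  then show ?thesis using assms by simp
qed

lemma Nh_eq0: assumes "Nh x = 0" shows "x = 0"
proof (rule eq_layers)
  fix k assume k: "k \<in> {1..s}"
  have "norm (pr k x) \<le> 0" using layer_le_Nh[OF k, of x] assms k by (simp add: zero_power)
  then show "pr k x = pr k 0" by simp
qed

lemma norm_le_Nh: "norm x \<le> (\<Sum>k=1..s. Nh x ^ k)"
proof -
  have "norm x = norm (\<Sum>k=1..s. pr k x)" using decomp by metis
  also have "\<dots> \<le> (\<Sum>k=1..s. norm (pr k x))" by (rule norm_sum)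
  also have "\<dots> \<le> (\<Sum>k=1..s. Nh x ^ k)" by (intro sum_mono layer_le_Nh)
  finally show ?thesis .
qed

lemma dil_inv: assumes "0 < t" shows "dil V s t (dil V s (1 / t) x) = x"
  using assms by (simp add: dil_dil)

lemma hd_lower: assumes hd: "hom_dist br V s d" shows "\<exists>c>0. \<forall>x. c * Nh x \<le> d x 0"
proof -
  have d0: "d x y = 0 \<longleftrightarrow> x = y" for x y using hd unfolding hom_dist_def by blast
  have dsym: "d x y = d y x" for x y using hd unfolding hom_dist_def by blast
  have dtri: "d x z \<le> d x y + d y z" for x y z using hd unfolding hom_dist_def by blast
  have dcont: "continuous_on UNIV (\<lambda>p. d (fst p) (snd p))" using hd unfolding hom_dist_def by blast
  have dhom: "d (dil V s r x) (dil V s r y) = r * d x y" if "r > 0" for r x y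
    using hd that unfolding hom_dist_def by blast
  have dnn: "0 \<le> d x y" for x y
  proof -
    have "d x x = 0" using d0 by simp
    then show ?thesis using dtri[where x=x and y=y and z=x] dsym[of y x] by linarith
  qed
  have dh0: "d (dil V s r x) 0 = r * d x 0" if "r > 0" for r x using dhom[OF that, of x 0] by simp
  define K where "K = {x. Nh x = 1}"
  have cK: "compact K"
  proof -
    have "norm x \<le> real s" if "x \<in> K" for x
      using norm_le_Nh[of x] that unfolding K_def by simp
    then have "bounded K" unfolding bounded_iff by blast
    moreover have "closed K" unfolding K_def
      by (rule closed_Collect_eq) (auto intro: Nh_cont)
    ultimately show ?thesis by (simp add: compact_eq_bounded_closed)
  qed
  have dil_K: "dil V s (1 / Nh x) x \<in> K" if "0 < Nh x" for x
    using that Nh_dil[of "1 / Nh x" x] unfolding K_def by simp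
  show ?thesis
  proof (cases "K = {}")
    case True
    have "Nh x = 0" for x
    proof (rule ccontr)
      assume "Nh x \<noteq> 0"
      then have "0 < Nh x" using Nh_nonneg[of x] by simp
      then show False using dil_K[of x] True by simp
    qed
    then show ?thesis using dnn by (intro exI[of _ 1]) simp
  next
    case False
    have cf: "continuous_on K (\<lambda>x. d x 0)"
    proof -
      have "continuous_on K (\<lambda>x. (x, 0::'a))" by (intro continuous_intros)
      then show ?thesis using continuous_on_compose2[OF dcont, of K "\<lambda>x. (x, 0)"] by simp
    qed
    obtain x0 where x0: "x0 \<in> K" "\<forall>y\<in>K. d x0 0 \<le> d y 0"
      using continuous_attains_inf[OF cK False cf] by blast
    have "x0 \<noteq> 0" using x0 unfolding K_def by auto
    then have cpos: "0 < d x0 0" using dnn[of x0 0] d0[of x0 0] by simp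
    have "d x0 0 * Nh x \<le> d x 0" for x
    proof (cases "Nh x = 0")
      case True then show ?thesis using dnn by simp
    next
      case False
      then have t: "0 < Nh x" using Nh_nonneg[of x] by simp
      define u where "u = dil V s (1 / Nh x) x"
      have "u \<in> K" unfolding u_def using dil_K[OF t] .
      then have "d x0 0 \<le> d u 0" using x0 by blast
      moreover have "d x 0 = Nh x * d u 0" unfolding u_def using dh0[OF t] dil_inv[OF t] by metis
      ultimately show ?thesis using t by (simp add: mult.commute)
    qed
    then show ?thesis using cpos by blast
  qed
qed

end

context ga begin

fun prodL :: "'a list \<Rightarrow> 'a" where
  "prodL [] = 0"
| "prodL (x # xs) = bch br s x (prodL xs)"

lemma prodL_Fil: "\<forall>x\<in>set xs. x \<in> Fil a \<Longrightarrow> prodL xs \<in> Fil a \<and> pr a (prodL xs) = sum_list (map (pr a) xs)"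
  by (induction xs) (auto simp: Fil_0 bch_Fil)

lemma continuous_on_bch: "continuous_on S f \<Longrightarrow> continuous_on S g \<Longrightarrow> continuous_on S (\<lambda>x. bch br s (f x) (g x))"
  unfolding continuous_on_def by (auto intro: tendsto_bch)

lemma continuous_on_sol: "continuous_on S f \<Longrightarrow> continuous_on S g \<Longrightarrow> continuous_on S (\<lambda>x. sol (f x) (g x))"
  unfolding continuous_on_def by (auto intro: tendsto_sol)

lemma continuous_on_prodL: "\<forall>f\<in>set fs. continuous_on S f \<Longrightarrow> continuous_on S (\<lambda>h. prodL (map (\<lambda>f. f h) fs))"
  by (induction fs) (auto intro: continuous_on_bch)

lemma Qb_x0: "Qb p 0 = 0"
  using bch_split[of p 0] by simp

lemma sol_Fil: assumes "p \<in> Fil a" "h \<in> Fil a" "pr a p = pr a h" shows "sol p h \<in> Fil (Suc a)"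
proof -
  define c where "c = sol p h"
  have b: "bch br s p c = h" unfolding c_def by (rule bch_sol)
  have "i \<le> Suc a \<Longrightarrow> c \<in> Fil i" for i
  proof (induction i)
    case 0 then show ?case by simp
  next
    case (Suc i)
    then have ci: "c \<in> Fil i" by simp
    have "pr i (Qb p c) = pr i (Qb p 0)" by (rule Qb_layer_eq) (use ci Fil_0 in auto)
    then have q: "pr i (Qb p c) = 0" by (simp add: Qb_x0)
    have e: "pr i p + pr i c = pr i h" using arg_cong[OF b, of "pr i"] q by (simp add: layer_bch)
    have "pr i c = pr i h - pr i p" using e by (metis add_diff_cancel_left')
    also have "\<dots> = 0"
    proof (cases "i < a")
      case True then show ?thesis using assms Fil_layer by simp
    next
      case False then have "i = a" using Suc.prems by simp
      then show ?thesis using assms by simp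
    qed
    finally show ?case using ci Fil_Suc by blast
  qed
  then show ?thesis unfolding c_def by simp
qed

end

locale gm = G: ga brG VG sG + M: ga brM VM sM
  for brG :: "'g::euclidean_space \<Rightarrow> 'g \<Rightarrow> 'g" and VG sG
  and brM :: "'m::euclidean_space \<Rightarrow> 'm \<Rightarrow> 'm" and VM sM
begin

lemma hhom_bound:
  assumes hh: "hhom brG VG sG brM VM sM L" and hdG: "hom_dist brG VG sG d" and hdM: "hom_dist brM VM sM \<rho>"
  shows "\<exists>K. \<forall>h. \<rho> (L h) 0 \<le> K * d h 0"
proof -
  have Lb: "L (bch brG sG x y) = bch brM sM (L x) (L y)" for x y using hh unfolding hhom_def by blast
  have Ld: "r > 0 \<Longrightarrow> L (dil VG sG r x) = dil VM sM r (L x)" for r x using hh unfolding hhom_def by blast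
  have r0: "\<rho> x y = 0 \<longleftrightarrow> x = y" for x y using hdM unfolding hom_dist_def by blast
  have rsym: "\<rho> x y = \<rho> y x" for x y using hdM unfolding hom_dist_def by blast
  have rtri: "\<rho> x z \<le> \<rho> x y + \<rho> y z" for x y z using hdM unfolding hom_dist_def by blast
  have rinv: "\<rho> (bch brM sM z x) (bch brM sM z y) = \<rho> x y" for z x y using hdM unfolding hom_dist_def by blast
  have rhom: "r > 0 \<Longrightarrow> \<rho> (dil VM sM r x) (dil VM sM r y) = r * \<rho> x y" for r x y
    using hdM unfolding hom_dist_def by blast
  have d0: "d x y = 0 \<longleftrightarrow> x = y" for x y using hdG unfolding hom_dist_def by blast
  have dsym: "d x y = d y x" for x y using hdG unfolding hom_dist_def by blast
  have dtri: "d x z \<le> d x y + d y z" for x y z using hdG unfolding hom_dist_def by blast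
  have rnn: "0 \<le> \<rho> x y" for x y
  proof -
    have "\<rho> x x = 0" using r0 by simp
    then show ?thesis using rtri[where x=x and y=y and z=x] rsym[of y x] by linarith
  qed
  have dnn: "0 \<le> d x y" for x y
  proof -
    have "d x x = 0" using d0 by simp
    then show ?thesis using dtri[where x=x and y=y and z=x] dsym[of y x] by linarith
  qed
  have L0: "L 0 = 0"
  proof -
    have "L 0 = 2 *\<^sub>R L 0" using Lb[of 0 0] M.bch_same[of "L 0"] by simp
    then show ?thesis by (simp add: scaleR_2)
  qed
  define \<phi> where "\<phi> h = \<rho> (L h) 0" for h
  have \<phi>0: "\<phi> 0 = 0" unfolding \<phi>_def L0 using r0 by simp
  have \<phi>nn: "0 \<le> \<phi> h" for h unfolding \<phi>_def by (rule rnn)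
  have \<phi>sub: "\<phi> (bch brG sG a b) \<le> \<phi> a + \<phi> b" for a b
  proof -
    have "\<rho> (bch brM sM (L a) (L b)) 0 \<le> \<rho> (bch brM sM (L a) (L b)) (L a) + \<rho> (L a) 0" by (rule rtri)
    also have "\<rho> (bch brM sM (L a) (L b)) (L a) = \<rho> (L b) 0"
      using rinv[of "L a" "L b" 0] by simp
    finally show ?thesis unfolding \<phi>_def Lb by simp
  qed
  have \<phi>dil: "\<phi> (dil VG sG r h) = r * \<phi> h" if "r > 0" for r h
    unfolding \<phi>_def Ld[OF that] using rhom[OF that, of "L h" 0] by simp
  have \<phi>prod: "\<phi> (G.prodL xs) \<le> sum_list (map \<phi> xs)" for xs
  proof (induction xs)
    case Nil then show ?case by (simp add: \<phi>0)
  next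
    case (Cons x xs) then show ?case using \<phi>sub[of x "G.prodL xs"] by simp
  qed
  have \<phi>scale: "\<phi> (c *\<^sub>R v) \<le> root a \<bar>c\<bar> * (\<phi> v + \<phi> (- v))" if v: "v \<in> VG a" and a: "1 \<le> a" for c v a
  proof (cases "c = 0")
    case True then show ?thesis using \<phi>0 by simp
  next
    case False
    have nv: "- v \<in> VG a" using v G.subsp subspace_neg by blast
    define t where "t = root a \<bar>c\<bar>"
    have t: "0 < t" unfolding t_def using False a by (simp add: real_root_gt_zero)
    have ta: "t ^ a = \<bar>c\<bar>" unfolding t_def using a by simp
    show ?thesis
    proof (cases "c > 0")
      case True
      have "c *\<^sub>R v = dil VG sG t v" using G.dil_V[OF v] ta True by simp
      then have "\<phi> (c *\<^sub>R v) = t * \<phi> v" using \<phi>dil[OF t] by simp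
      then show ?thesis using \<phi>nn[of "- v"] t unfolding t_def by (simp add: distrib_left)
    next
      case False
      have "c *\<^sub>R v = dil VG sG t (- v)" using G.dil_V[OF nv] ta False \<open>c \<noteq> 0\<close> by simp
      then have "\<phi> (c *\<^sub>R v) = t * \<phi> (- v)" using \<phi>dil[OF t] by simp
      then show ?thesis using \<phi>nn[of v] t unfolding t_def by (simp add: distrib_left)
    qed
  qed
  obtain bl where bl: "set bl = (Basis :: 'g set)" "distinct bl"
    using finite_distinct_list[OF finite_Basis] by blast
  have step: "\<forall>R. \<exists>K. \<forall>h\<in>G.Fil a. norm h \<le> R \<longrightarrow> \<phi> h \<le> K"
    if IH: "\<forall>R. \<exists>K. \<forall>h\<in>G.Fil (Suc a). norm h \<le> R \<longrightarrow> \<phi> h \<le> K" and a: "1 \<le> a" for a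
  proof
    fix R
    let ?pa = "layer VG sG a"
    define q where "q h = map (\<lambda>b. (?pa h \<bullet> b) *\<^sub>R ?pa b) bl" for h
    define p where "p h = G.prodL (q h)" for h
    define c where "c h = G.sol (p h) h" for h
    have pc: "bch brG sG (p h) (c h) = h" for h unfolding c_def by (rule G.bch_sol)
    have qV: "\<forall>x\<in>set (q h). x \<in> VG a" for h
      unfolding q_def using G.layer_in G.subsp subspace_scale by fastforce
    have qF: "\<forall>x\<in>set (q h). x \<in> G.Fil a" for h
      using qV G.V_Fil by blast
    have pF: "p h \<in> G.Fil a" "?pa (p h) = ?pa h" for h
    proof -
      show "p h \<in> G.Fil a" unfolding p_def using G.prodL_Fil[OF qF] by blast
      have "?pa (p h) = sum_list (map ?pa (q h))" unfolding p_def using G.prodL_Fil[OF qF] by blast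
      also have "\<dots> = (\<Sum>b\<in>Basis. (?pa h \<bullet> b) *\<^sub>R ?pa b)"
        unfolding q_def using bl by (simp add: sum_list_distinct_conv_sum_set o_def G.layer_scale G.layer_layer)
      also have "\<dots> = ?pa (\<Sum>b\<in>Basis. (?pa h \<bullet> b) *\<^sub>R b)"
        by (simp add: G.layer_sum G.layer_scale)
      also have "\<dots> = ?pa h" by (simp add: euclidean_representation G.layer_layer)
      finally show "?pa (p h) = ?pa h" .
    qed
    have cF: "h \<in> G.Fil a \<Longrightarrow> c h \<in> G.Fil (Suc a)" for h
      unfolding c_def by (rule G.sol_Fil) (use pF in auto)
    have ccont: "continuous_on UNIV c"
    proof -
      have pac: "continuous_on UNIV (\<lambda>h. ?pa h)" by (rule linear_continuous_on[OF G.bl_layer])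
      have "continuous_on UNIV (\<lambda>h. G.prodL (map (\<lambda>f. f h) (map (\<lambda>b h. (?pa h \<bullet> b) *\<^sub>R ?pa b) bl)))"
        by (rule G.continuous_on_prodL)
           (auto intro!: continuous_intros pac)
      then have "continuous_on UNIV p" unfolding p_def q_def by (simp add: o_def)
      then show ?thesis unfolding c_def by (intro G.continuous_on_sol continuous_on_id)
    qed
    have "compact (c ` cball 0 R)"
      by (rule compact_continuous_image) (use ccont continuous_on_subset in auto)
    then obtain R' where R': "\<forall>y\<in>c ` cball 0 R. norm y \<le> R'"
      using compact_imp_bounded bounded_iff by metis
    obtain K' where K': "\<forall>h\<in>G.Fil (Suc a). norm h \<le> R' \<longrightarrow> \<phi> h \<le> K'" using IH by blast
    obtain Cp where Cp: "\<forall>x. norm (?pa x) \<le> norm x * Cp" "Cp > 0"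
      using bounded_linear.pos_bounded[OF G.bl_layer] by blast
    define K0 where "K0 = sum_list (map (\<lambda>b. root a (R * Cp) * (\<phi> (?pa b) + \<phi> (- ?pa b))) bl)"
    have "\<phi> h \<le> K0 + K'" if h: "h \<in> G.Fil a" "norm h \<le> R" for h
    proof -
      have "\<phi> h \<le> \<phi> (p h) + \<phi> (c h)" using \<phi>sub[of "p h" "c h"] pc[of h] by simp
      moreover have "\<phi> (c h) \<le> K'" using K' cF[OF h(1)] R' h(2) by auto
      moreover have "\<phi> (p h) \<le> K0"
      proof -
        have "\<phi> (p h) \<le> sum_list (map \<phi> (q h))" unfolding p_def by (rule \<phi>prod)
        also have "\<dots> \<le> K0" unfolding q_def K0_def map_map o_def
        proof (rule sum_list_mono)
          fix b assume b: "b \<in> set bl"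
          have "\<bar>?pa h \<bullet> b\<bar> \<le> norm (?pa h) * norm b" by (rule Cauchy_Schwarz_ineq2)
          also have "\<dots> = norm (?pa h)" using b bl by simp
          also have "\<dots> \<le> R * Cp" using Cp(1)[rule_format, of h] h(2) Cp(2)
            by (meson mult_right_mono less_imp_le order_trans)
          finally have cb: "\<bar>?pa h \<bullet> b\<bar> \<le> R * Cp" .
          have "\<phi> ((?pa h \<bullet> b) *\<^sub>R ?pa b) \<le> root a \<bar>?pa h \<bullet> b\<bar> * (\<phi> (?pa b) + \<phi> (- ?pa b))"
            by (rule \<phi>scale[OF G.layer_in a])
          also have "\<dots> \<le> root a (R * Cp) * (\<phi> (?pa b) + \<phi> (- ?pa b))"
            using cb a by (intro mult_right_mono add_nonneg_nonneg \<phi>nn) auto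
          finally show "\<phi> ((?pa h \<bullet> b) *\<^sub>R ?pa b) \<le> root a (R * Cp) * (\<phi> (?pa b) + \<phi> (- ?pa b))" .
        qed
        finally show ?thesis .
      qed
      ultimately show ?thesis by linarith
    qed
    then show "\<exists>K. \<forall>h\<in>G.Fil a. norm h \<le> R \<longrightarrow> \<phi> h \<le> K" by blast
  qed
  have all: "\<forall>R. \<exists>K. \<forall>h\<in>G.Fil (Suc sG - j). norm h \<le> R \<longrightarrow> \<phi> h \<le> K" for j
  proof (induction j)
    case 0
    have "G.Fil (Suc sG) = {0}" by (rule G.Fil_big) simp
    then show ?case using \<phi>0 by auto
  next
    case (Suc j)
    show ?case
    proof (cases "Suc j \<le> sG")
      case True
      then have "Suc sG - j = Suc (Suc sG - Suc j)" "1 \<le> Suc sG - Suc j" by auto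
      then show ?thesis using step Suc.IH by metis
    next
      case False
      then have "Suc sG - Suc j = 0" "Suc sG - j \<le> 1" by auto
      then have "G.Fil (Suc sG - Suc j) = G.Fil (Suc sG - j)" using G.Fil_1
        by (metis One_nat_def le_SucE le_zero_eq)
      then show ?thesis using Suc.IH by simp
    qed
  qed
  obtain K1 where K1: "\<forall>h. norm h \<le> real sG \<longrightarrow> \<phi> h \<le> K1"
    using all[of sG] by auto
  obtain cG where cG: "cG > 0" "\<forall>x. cG * G.Nh x \<le> d x 0" using G.hd_lower[OF hdG] by blast
  have "\<phi> h \<le> (max K1 0 / cG) * d h 0" for h
  proof (cases "G.Nh h = 0")
    case True
    then have "h = 0" by (rule G.Nh_eq0)
    then show ?thesis using \<phi>0 dnn[of h 0] cG by simp
  next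
    case False
    then have t: "0 < G.Nh h" using G.Nh_nonneg[of h] by simp
    define u where "u = dil VG sG (1 / G.Nh h) h"
    have Nu: "G.Nh u = 1" unfolding u_def using G.Nh_dil[of "1 / G.Nh h" h] t by simp
    have "norm u \<le> real sG" using G.norm_le_Nh[of u] Nu by simp
    then have pu: "\<phi> u \<le> max K1 0" using K1 by fastforce
    have "\<phi> h = G.Nh h * \<phi> u" unfolding u_def using \<phi>dil[OF t] G.dil_inv[OF t] by metis
    also have "\<dots> \<le> G.Nh h * max K1 0" using pu t by (simp add: mult_left_mono)
    also have "\<dots> \<le> (d h 0 / cG) * max K1 0"
      using cG t by (intro mult_right_mono) (auto simp: field_simps mult.commute)
    finally show ?thesis by (simp add: field_simps)
  qed
  then show ?thesis unfolding \<phi>_def by blast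
qed

end

definition ismall :: "'x filter \<Rightarrow> ('x \<Rightarrow> real) \<Rightarrow> ('x \<Rightarrow> 'b::real_normed_vector) \<Rightarrow> bool" where
  "ismall F \<delta> b \<longleftrightarrow> (\<forall>\<epsilon>>0. eventually (\<lambda>h. norm (b h) \<le> \<epsilon> * \<delta> h) F)"

definition ibig :: "'x filter \<Rightarrow> ('x \<Rightarrow> real) \<Rightarrow> ('x \<Rightarrow> 'b::real_normed_vector) \<Rightarrow> bool" where
  "ibig F \<delta> b \<longleftrightarrow> (\<exists>C. eventually (\<lambda>h. norm (b h) \<le> C * \<delta> h) F)"

lemma ismallI: "(\<And>\<epsilon>. \<epsilon> > 0 \<Longrightarrow> eventually (\<lambda>h. norm (b h) \<le> \<epsilon> * \<delta> h) F) \<Longrightarrow> ismall F \<delta> b"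
  unfolding ismall_def by blast

lemma ismallD: "ismall F \<delta> b \<Longrightarrow> \<epsilon> > 0 \<Longrightarrow> eventually (\<lambda>h. norm (b h) \<le> \<epsilon> * \<delta> h) F"
  unfolding ismall_def by blast

lemma ismall_add: assumes "ismall F \<delta> a" "ismall F \<delta> b" shows "ismall F \<delta> (\<lambda>h. a h + b h)"
proof (rule ismallI)
  fix \<epsilon> :: real assume e: "\<epsilon> > 0"
  have e2: "\<epsilon>/2 > 0" using e by simp
  have "eventually (\<lambda>h. norm (a h) \<le> \<epsilon>/2 * \<delta> h) F" "eventually (\<lambda>h. norm (b h) \<le> \<epsilon>/2 * \<delta> h) F"
    using ismallD[OF assms(1) e2] ismallD[OF assms(2) e2] by auto
  then show "eventually (\<lambda>h. norm (a h + b h) \<le> \<epsilon> * \<delta> h) F"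
  proof eventually_elim
    case (elim h)
    have "norm (a h + b h) \<le> norm (a h) + norm (b h)" by (rule norm_triangle_ineq)
    also have "\<dots> \<le> \<epsilon> * \<delta> h" using elim by linarith
    finally show ?case .
  qed
qed

lemma ismall_mono: assumes "ismall F \<delta> a" "eventually (\<lambda>h. norm (b h) \<le> C * norm (a h)) F"
  shows "ismall F \<delta> b"
proof (rule ismallI)
  fix \<epsilon> :: real assume e: "\<epsilon> > 0"
  define C' where "C' = max C 1"
  have C': "C' > 0" "C \<le> C'" unfolding C'_def by auto
  have eC: "\<epsilon> / C' > 0" using e C' by simp
  have "eventually (\<lambda>h. norm (a h) \<le> (\<epsilon> / C') * \<delta> h) F" using ismallD[OF assms(1) eC] by simp
  with assms(2) show "eventually (\<lambda>h. norm (b h) \<le> \<epsilon> * \<delta> h) F"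
  proof eventually_elim
    case (elim h)
    have "norm (b h) \<le> C' * norm (a h)" using elim(1) C' by (meson mult_right_mono norm_ge_zero order_trans)
    also have "\<dots> \<le> C' * ((\<epsilon> / C') * \<delta> h)" using elim(2) C' by (intro mult_left_mono) auto
    also have "\<dots> = \<epsilon> * \<delta> h" using C' by simp
    finally show ?case .
  qed
qed

lemma ismall_neg: "ismall F \<delta> a \<Longrightarrow> ismall F \<delta> (\<lambda>h. - a h)"
  by (rule ismall_mono[of _ _ a _ 1]) auto

lemma ismall_diff: "ismall F \<delta> a \<Longrightarrow> ismall F \<delta> b \<Longrightarrow> ismall F \<delta> (\<lambda>h. a h - b h)"
  using ismall_add[of F \<delta> a "\<lambda>h. - b h"] ismall_neg[of F \<delta> b] by simp

lemma ismall_linear: assumes "ismall F \<delta> a" "bounded_linear B" shows "ismall F \<delta> (\<lambda>h. B (a h))"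
proof -
  obtain K where K: "\<forall>x. norm (B x) \<le> norm x * K" using bounded_linear.bounded[OF assms(2)] by blast
  show ?thesis by (rule ismall_mono[OF assms(1), of _ K]) (use K in \<open>auto simp: mult.commute\<close>)
qed

lemma ismall_zero: "ismall F \<delta> (\<lambda>h. 0)" if "eventually (\<lambda>h. 0 \<le> \<delta> h) F"
  using that by (auto intro!: ismallI elim: eventually_mono)

lemma ismall_sum: assumes d: "eventually (\<lambda>h. 0 \<le> \<delta> h) F" and fin: "finite S"
  and sm: "\<And>i. i \<in> S \<Longrightarrow> ismall F \<delta> (\<lambda>h. a i h)" shows "ismall F \<delta> (\<lambda>h. \<Sum>i\<in>S. a i h)"
  using fin sm
proof (induction S rule: finite_induct)
  case empty then show ?case by (simp add: ismall_zero[OF d])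
next
  case (insert i S) then show ?case by (auto intro: ismall_add)
qed

lemma ismall_cong: "ismall F \<delta> a \<Longrightarrow> eventually (\<lambda>h. a h = b h) F \<Longrightarrow> ismall F \<delta> b"
  by (rule ismall_mono[of _ _ a _ 1]) (auto elim: eventually_mono)

lemma ismall_tendsto: assumes "eventually (\<lambda>h. \<delta> h > 0) F"
  shows "ismall F \<delta> b \<longleftrightarrow> ((\<lambda>h. norm (b h) / \<delta> h) \<longlongrightarrow> 0) F"
proof
  assume s: "ismall F \<delta> b"
  show "((\<lambda>h. norm (b h) / \<delta> h) \<longlongrightarrow> 0) F"
  proof (rule tendstoI)
    fix \<epsilon> :: real assume e: "\<epsilon> > 0"
    have e2: "\<epsilon>/2 > 0" using e by simp
    from ismallD[OF s e2] assms
    show "eventually (\<lambda>h. dist (norm (b h) / \<delta> h) 0 < \<epsilon>) F"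
    proof eventually_elim
      case (elim h)
      then have a: "norm (b h) / \<delta> h \<le> \<epsilon> / 2" by (simp add: divide_le_eq)
      have "0 \<le> norm (b h) / \<delta> h" using elim(2) by simp
      then have "dist (norm (b h) / \<delta> h) 0 = norm (b h) / \<delta> h" by (simp only: dist_real_def diff_0_right abs_of_nonneg)
      then show ?case using a e by linarith
    qed
  qed
next
  assume t: "((\<lambda>h. norm (b h) / \<delta> h) \<longlongrightarrow> 0) F"
  show "ismall F \<delta> b"
  proof (rule ismallI)
    fix \<epsilon> :: real assume e: "\<epsilon> > 0"
    from tendstoD[OF t e] assms
    show "eventually (\<lambda>h. norm (b h) \<le> \<epsilon> * \<delta> h) F"
    proof eventually_elim
      case (elim h)
      then have "norm (b h) / \<delta> h < \<epsilon>" by simp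
      then show ?case using elim(2) by (simp add: divide_less_eq)
    qed
  qed
qed

lemma ismall_ibig: assumes "ibig F \<delta> b" "\<And>\<epsilon>. \<epsilon> > 0 \<Longrightarrow> eventually (\<lambda>h. norm (c h) \<le> \<epsilon> * norm (b h)) F"
  and d: "eventually (\<lambda>h. 0 \<le> \<delta> h) F"
  shows "ismall F \<delta> c"
proof (rule ismallI)
  fix \<epsilon> :: real assume e: "\<epsilon> > 0"
  obtain C where C: "eventually (\<lambda>h. norm (b h) \<le> C * \<delta> h) F" using assms(1) unfolding ibig_def by blast
  define C' where "C' = max C 1"
  have C': "C' > 0" unfolding C'_def by auto
  have eC: "\<epsilon> / C' > 0" using e C' by simp
  from C assms(2)[OF eC] d
  show "eventually (\<lambda>h. norm (c h) \<le> \<epsilon> * \<delta> h) F"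
  proof (eventually_elim)
    case (elim h)
    have "C * \<delta> h \<le> C' * \<delta> h" unfolding C'_def using elim(3) by (intro mult_right_mono) auto
    then have "norm (b h) \<le> C' * \<delta> h" using elim(1) by linarith
    then have "norm (c h) \<le> \<epsilon> / C' * (C' * \<delta> h)"
      using elim(2) eC by (meson less_imp_le mult_left_mono order_trans)
    then show ?case using C' by simp
  qed
qed

lemma ibig_mono: "ibig F \<delta> a \<Longrightarrow> eventually (\<lambda>h. norm (b h) \<le> C * norm (a h)) F \<Longrightarrow> eventually (\<lambda>h. 0 \<le> \<delta> h) F
   \<Longrightarrow> ibig F \<delta> b"
proof -
  assume a: "ibig F \<delta> a" and b: "eventually (\<lambda>h. norm (b h) \<le> C * norm (a h)) F" and d: "eventually (\<lambda>h. 0 \<le> \<delta> h) F"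
  obtain K where K: "eventually (\<lambda>h. norm (a h) \<le> K * \<delta> h) F" using a unfolding ibig_def by blast
  define C' where "C' = max C 0"
  define K' where "K' = max K 0"
  from K b d have "eventually (\<lambda>h. norm (b h) \<le> (C' * K') * \<delta> h) F"
  proof eventually_elim
    case (elim h)
    have "norm (b h) \<le> C' * norm (a h)" using elim(2) unfolding C'_def
      by (meson max.cobounded1 mult_right_mono norm_ge_zero order_trans)
    also have "\<dots> \<le> C' * (K' * \<delta> h)"
    proof (rule mult_left_mono)
      have "K * \<delta> h \<le> K' * \<delta> h" unfolding K'_def using elim(3) by (intro mult_right_mono) auto
      then show "norm (a h) \<le> K' * \<delta> h" using elim(1) by linarith
      show "0 \<le> C'" unfolding C'_def by simp
    qed
    finally show ?case by (simp add: mult.assoc)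
  qed
  then show ?thesis unfolding ibig_def by blast
qed

lemma ismall_imp_ibig: "ismall F \<delta> b \<Longrightarrow> ibig F \<delta> b"
  unfolding ismall_def ibig_def by (metis zero_less_one)

lemma ibig_tendsto0: assumes "ibig F \<delta> b" "(\<delta> \<longlongrightarrow> 0) F" shows "(b \<longlongrightarrow> 0) F"
proof -
  obtain C where C: "eventually (\<lambda>h. norm (b h) \<le> C * \<delta> h) F" using assms(1) unfolding ibig_def by blast
  have "((\<lambda>h. C * \<delta> h) \<longlongrightarrow> C * 0) F" by (intro tendsto_intros assms(2))
  then show ?thesis using Lim_null_comparison[OF C] by simp
qed

lemma ibig_comb: assumes "ibig F \<delta> a" "ibig F \<delta> b" "eventually (\<lambda>h. 0 \<le> \<delta> h) F"
  "eventually (\<lambda>h. norm (c h) \<le> A * norm (a h) + B * norm (b h)) F" "0 \<le> A" "0 \<le> B"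
  shows "ibig F \<delta> c"
proof -
  obtain Ca where Ca: "eventually (\<lambda>h. norm (a h) \<le> Ca * \<delta> h) F" using assms(1) unfolding ibig_def by blast
  obtain Cb where Cb: "eventually (\<lambda>h. norm (b h) \<le> Cb * \<delta> h) F" using assms(2) unfolding ibig_def by blast
  from Ca Cb assms(3,4) have "eventually (\<lambda>h. norm (c h) \<le> (A * Ca + B * Cb) * \<delta> h) F"
  proof eventually_elim
    case (elim h)
    have "A * norm (a h) \<le> A * (Ca * \<delta> h)" using elim(1) assms(5) by (rule mult_left_mono)
    moreover have "B * norm (b h) \<le> B * (Cb * \<delta> h)" using elim(2) assms(6) by (rule mult_left_mono)
    ultimately show ?case using elim(4) by (simp add: algebra_simps)
  qed
  then show ?thesis unfolding ibig_def by blast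
qed

context ga begin

lemma norm_le_sNh: assumes "Nh x \<le> 1" shows "norm x \<le> s * Nh x"
proof -
  have "norm x \<le> (\<Sum>k=1..s. Nh x ^ k)" by (rule norm_le_Nh)
  also have "\<dots> \<le> (\<Sum>k=1..s. Nh x)"
  proof (rule sum_mono)
    fix k assume "k \<in> {1..s}"
    then obtain k' where k: "k = Suc k'" by (cases k) auto
    have "Nh x ^ k' \<le> 1" using assms Nh_nonneg[of x] by (simp add: power_le_one)
    then have "Nh x * Nh x ^ k' \<le> Nh x * 1" using Nh_nonneg[of x] by (rule mult_left_mono)
    then show "Nh x ^ k \<le> Nh x" unfolding k by simp
  qed
  also have "\<dots> = s * Nh x" by simp
  finally show ?thesis .
qed

lemma sol00: "sol 0 0 = 0" using sol_unique[of 0 0 0] by simp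
lemma solX: "sol (- X) 0 = X" using sol_unique[of "- X" X 0] by simp

end

context gm begin

lemma core:
  assumes hdG: "hom_dist brG VG sG d" and hdM: "hom_dist brM VM sM \<rho>"
    and pd: "P_diff brG VG sG d brM VM sM \<rho> f x Df"
  shows "ismall (at 0) (\<lambda>h. d h 0)
           (\<lambda>h. (f (bch brG sG x h) - f x) - M.Tinv (f x) (layer VM sM 1 (Df h)))"
proof -
  define X where "X = f x"
  define \<delta> where "\<delta> h = d h 0" for h
  define D where "D h = Df h" for h
  define g where "g h = bch brM sM (- X) (f (bch brG sG x h))" for h
  define z where "z h = bch brM sM (- D h) (g h)" for h
  define Y where "Y h = f (bch brG sG x h) - X" for h
  define ell where "ell h = layer VM sM 1 (D h)" for h
  let ?F = "at (0::'g)"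
  have hh: "hhom brG VG sG brM VM sM Df" and lim: "((\<lambda>h. \<rho> (g h) (D h) / \<delta> h) \<longlongrightarrow> 0) ?F"
    using pd unfolding P_diff_def g_def D_def \<delta>_def X_def by auto
  have r0: "\<rho> x y = 0 \<longleftrightarrow> x = y" for x y using hdM unfolding hom_dist_def by blast
  have rsym: "\<rho> x y = \<rho> y x" for x y using hdM unfolding hom_dist_def by blast
  have rtri: "\<rho> x z \<le> \<rho> x y + \<rho> y z" for x y z using hdM unfolding hom_dist_def by blast
  have rinv: "\<rho> (bch brM sM z x) (bch brM sM z y) = \<rho> x y" for z x y using hdM unfolding hom_dist_def by blast
  have d0: "d x y = 0 \<longleftrightarrow> x = y" for x y using hdG unfolding hom_dist_def by blast
  have dsym: "d x y = d y x" for x y using hdG unfolding hom_dist_def by blast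
  have dtri: "d x z \<le> d x y + d y z" for x y z using hdG unfolding hom_dist_def by blast
  have dcont: "continuous_on UNIV (\<lambda>p. d (fst p) (snd p))" using hdG unfolding hom_dist_def by blast
  have rnn: "0 \<le> \<rho> x y" for x y
  proof -
    have "\<rho> x x = 0" using r0 by simp
    then show ?thesis using rtri[where x=x and y=y and z=x] rsym[of y x] by linarith
  qed
  have dnn: "0 \<le> d x y" for x y
  proof -
    have "d x x = 0" using d0 by simp
    then show ?thesis using dtri[where x=x and y=y and z=x] dsym[of y x] by linarith
  qed
  have \<delta>pos: "eventually (\<lambda>h. \<delta> h > 0) ?F"
  proof -
    have "eventually (\<lambda>h. h \<noteq> 0) ?F" by (simp add: eventually_at_filter)
    then show ?thesis by eventually_elim (use d0 dnn in \<open>auto simp: \<delta>_def order_le_less\<close>)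
  qed
  have \<delta>nn: "eventually (\<lambda>h. 0 \<le> \<delta> h) ?F" using dnn unfolding \<delta>_def by simp
  have \<delta>0: "(\<delta> \<longlongrightarrow> 0) ?F"
  proof -
    have "isCont (\<lambda>p. d (fst p) (snd p)) (0, 0)" using dcont by (simp add: continuous_on_eq_continuous_at)
    moreover have "((\<lambda>h. (h, 0::'g)) \<longlongrightarrow> (0, 0)) ?F" by (intro tendsto_intros)
    ultimately have "((\<lambda>h. d h 0) \<longlongrightarrow> d 0 0) ?F" using isCont_tendsto_compose by fastforce
    moreover have "d 0 0 = 0" using d0 by simp
    ultimately show ?thesis unfolding \<delta>_def by simp
  qed
  have \<delta>small: "eventually (\<lambda>h. \<delta> h \<le> c) ?F" if "c > 0" for c
    using order_tendstoD(2)[OF \<delta>0 that] by (auto elim: eventually_mono)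
  have rz: "\<rho> (g h) (D h) = \<rho> (z h) 0" for h
  proof -
    have "\<rho> (g h) (D h) = \<rho> (bch brM sM (- D h) (D h)) (bch brM sM (- D h) (g h))"
      using rinv rsym by metis
    then show ?thesis unfolding z_def using rsym by simp
  qed
  have sr: "ismall ?F \<delta> (\<lambda>h. \<rho> (z h) 0)"
    using lim unfolding rz ismall_tendsto[OF \<delta>pos] using rnn by simp
  obtain cM where cM: "cM > 0" "\<forall>y. cM * M.Nh y \<le> \<rho> y 0" using M.hd_lower[OF hdM] by blast
  have zs: "ismall ?F \<delta> z"
  proof (rule ismall_mono[OF sr, of _ "real sM / cM"])
    have "eventually (\<lambda>h. norm (\<rho> (z h) 0) \<le> 1 * \<delta> h) ?F" by (rule ismallD[OF sr]) simp
    then have "eventually (\<lambda>h. \<rho> (z h) 0 \<le> \<delta> h) ?F" by eventually_elim (use rnn in simp)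
    with \<delta>small[OF cM(1)] show "eventually (\<lambda>h. norm (z h) \<le> real sM / cM * norm (\<rho> (z h) 0)) ?F"
    proof eventually_elim
      case (elim h)
      have N: "cM * M.Nh (z h) \<le> \<rho> (z h) 0" using cM by blast
      have "cM * M.Nh (z h) \<le> cM * 1" using N elim by linarith
      then have "M.Nh (z h) \<le> 1" using cM(1) by (simp add: mult_le_cancel_left_pos)
      then have "norm (z h) \<le> sM * M.Nh (z h)" by (rule M.norm_le_sNh)
      also have "\<dots> \<le> sM * (\<rho> (z h) 0 / cM)" using N cM by (intro mult_left_mono) (auto simp: field_simps)
      finally show ?case using rnn by simp
    qed
  qed
  obtain K where K: "\<forall>h. \<rho> (D h) 0 \<le> K * \<delta> h"
    using hhom_bound[OF hh hdG hdM] unfolding D_def \<delta>_def by blast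
  define K1 where "K1 = max (K / cM) 1"
  have K1: "K1 \<ge> 1" unfolding K1_def by simp
  have NhD: "eventually (\<lambda>h. M.Nh (D h) \<le> K1 * \<delta> h) ?F"
    using \<delta>nn
  proof eventually_elim
    case (elim h)
    have "cM * M.Nh (D h) \<le> K * \<delta> h" using cM K order_trans by blast
    then have "M.Nh (D h) \<le> (K / cM) * \<delta> h" using cM by (simp add: field_simps mult.commute)
    also have "\<dots> \<le> K1 * \<delta> h" unfolding K1_def using elim by (intro mult_right_mono) auto
    finally show ?case .
  qed
  have NhD1: "eventually (\<lambda>h. M.Nh (D h) \<le> 1) ?F"
  proof -
    have "1 / K1 > 0" using K1 by simp
    from NhD \<delta>small[OF this] show ?thesis
    proof eventually_elim
      case (elim h)
      have "K1 * \<delta> h \<le> K1 * (1 / K1)" using elim(2) K1 by (intro mult_left_mono) auto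
      then show ?case using elim(1) K1 by simp
    qed
  qed
  have Dbig: "ibig ?F \<delta> D"
  proof -
    from NhD NhD1 have "eventually (\<lambda>h. norm (D h) \<le> (sM * K1) * \<delta> h) ?F"
    proof eventually_elim
      case (elim h)
      have "norm (D h) \<le> sM * M.Nh (D h)" using elim(2) by (rule M.norm_le_sNh)
      also have "\<dots> \<le> sM * (K1 * \<delta> h)" using elim(1) by (intro mult_left_mono) auto
      finally show ?case by (simp add: mult.assoc)
    qed
    then show ?thesis unfolding ibig_def by blast
  qed
  have Dhigh: "ismall ?F \<delta> (\<lambda>h. layer VM sM k (D h))" if k: "k \<in> {2..sM}" for k
  proof (rule ismallI)
    fix \<epsilon> :: real assume e: "\<epsilon> > 0"
    have c: "min (1 / K1) (\<epsilon> / (K1 * K1)) > 0" using K1 e by simp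
    from NhD \<delta>small[OF c] \<delta>nn show "eventually (\<lambda>h. norm (layer VM sM k (D h)) \<le> \<epsilon> * \<delta> h) ?F"
    proof eventually_elim
      case (elim h)
      have k1: "k \<in> {1..sM}" using k by auto
      have K1p: "0 \<le> K1" "0 < K1 * K1" using K1 by auto
      have "\<delta> h \<le> 1 / K1" using elim(2) by simp
      then have "K1 * \<delta> h \<le> K1 * (1 / K1)" using K1p(1) by (rule mult_left_mono)
      then have u: "K1 * \<delta> h \<le> 1" using K1 by simp
      have "\<delta> h \<le> \<epsilon> / (K1 * K1)" using elim(2) by simp
      then have "(K1 * K1) * \<delta> h \<le> (K1 * K1) * (\<epsilon> / (K1 * K1))" using K1p(2) by (intro mult_left_mono) auto
      moreover have "K1 \<noteq> 0" using K1 by simp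
      ultimately have v: "K1 * K1 * \<delta> h \<le> \<epsilon>" by simp
      define k' where "k' = k - 2"
      have kk: "k = Suc (Suc k')" using k unfolding k'_def by auto
      have "norm (layer VM sM k (D h)) \<le> M.Nh (D h) ^ k" by (rule M.layer_le_Nh[OF k1])
      also have "\<dots> \<le> (K1 * \<delta> h) ^ k" using elim(1) M.Nh_nonneg by (intro power_mono) auto
      also have "\<dots> = (K1 * \<delta> h) ^ 2 * (K1 * \<delta> h) ^ k'" unfolding kk by (simp add: power2_eq_square)
      also have "\<dots> \<le> (K1 * \<delta> h) ^ 2 * 1"
        using u elim(3) K1 by (intro mult_left_mono power_le_one) auto
      also have "\<dots> = (K1 * K1 * \<delta> h) * \<delta> h" by (simp add: power2_eq_square)
      also have "\<dots> \<le> \<epsilon> * \<delta> h" using v elim(3) by (rule mult_right_mono)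
      finally show ?case .
    qed
  qed
  have D0: "(D \<longlongrightarrow> 0) ?F" by (rule ibig_tendsto0[OF Dbig \<delta>0])
  have z0: "(z \<longlongrightarrow> 0) ?F" by (rule ibig_tendsto0[OF ismall_imp_ibig[OF zs] \<delta>0])
  have gsol: "g h = M.sol (- D h) (z h)" for h unfolding z_def by (rule M.sol_unique) simp
  have g0: "(g \<longlongrightarrow> 0) ?F"
  proof -
    have "((\<lambda>h. M.sol (- D h) (z h)) \<longlongrightarrow> M.sol (- 0) 0) ?F"
      by (intro M.tendsto_sol tendsto_minus D0 z0)
    moreover have "g = (\<lambda>h. M.sol (- D h) (z h))" using gsol by auto
    ultimately show ?thesis using M.sol00 by simp
  qed
  have Qest: "eventually (\<lambda>h. norm (z h + D h - g h) \<le> \<epsilon> * norm (- D h, g h)) ?F" if e: "\<epsilon> > 0" for \<epsilon>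
  proof -
    obtain \<eta> where \<eta>: "\<eta> > 0" "\<forall>q. norm (q - (0, 0)) < \<eta> \<longrightarrow>
        norm (bch brM sM (fst q) (snd q) - bch brM sM (fst (0::'m, 0::'m)) (snd (0::'m, 0::'m)) - (fst (q - (0, 0)) + snd (q - (0, 0))))
        \<le> \<epsilon> * norm (q - (0, 0))"
      using M.bch_deriv0 e unfolding has_derivative_at_alt by blast
    have t: "((\<lambda>h. (- D h, g h)) \<longlongrightarrow> 0) ?F"
      using tendsto_Pair[OF tendsto_minus[OF D0] g0] by (simp add: zero_prod_def)
    have "eventually (\<lambda>h. norm (- D h, g h) < \<eta>) ?F"
      using order_tendstoD(2)[OF tendsto_norm_zero[OF t] \<eta>(1)] by simp
    then show ?thesis
    proof eventually_elim
      case (elim h)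
      have "norm (bch brM sM (- D h) (g h) - 0 - (- D h + g h)) \<le> \<epsilon> * norm (- D h, g h)"
        using \<eta>(2)[rule_format, of "(- D h, g h)"] elim by simp
      then show ?case unfolding z_def by (simp add: algebra_simps)
    qed
  qed
  have gbig: "ibig ?F \<delta> g"
  proof (rule ibig_comb[OF ismall_imp_ibig[OF zs] Dbig \<delta>nn _ _ _, of _ 2 3])
    have QQ: "eventually (\<lambda>h. norm (z h + D h - g h) \<le> 1 / 2 * norm (- D h, g h)) ?F"
      by (rule Qest) simp
    from QQ show "eventually (\<lambda>h. norm (g h) \<le> 2 * norm (z h) + 3 * norm (D h)) ?F"
    proof eventually_elim
      case (elim h)
      have "norm (- D h, g h) \<le> norm (D h) + norm (g h)" using norm_Pair_le[of "- D h" "g h"] by simp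
      have a: "norm (g h) \<le> norm (z h + D h) + norm (z h + D h - g h)"
        using norm_triangle_sub[of "g h" "z h + D h"] norm_minus_commute[of "g h" "z h + D h"] by simp
      show ?case
        using a elim \<open>norm (- D h, g h) \<le> norm (D h) + norm (g h)\<close> norm_triangle_ineq[of "z h" "D h"] by linarith
    qed
  qed auto
  have gD: "ismall ?F \<delta> (\<lambda>h. g h - D h)"
  proof -
    have pairbig: "ibig ?F \<delta> (\<lambda>h. (- D h, g h))"
    proof (rule ibig_comb[OF Dbig gbig \<delta>nn _ _ _, of _ 1 1])
      have "norm (- D h, g h) \<le> 1 * norm (D h) + 1 * norm (g h)" for h
        using norm_Pair_le[of "- D h" "g h"] by simp
      then show "eventually (\<lambda>h. norm (- D h, g h) \<le> 1 * norm (D h) + 1 * norm (g h)) ?F" by simp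
    qed auto
    have q: "ismall ?F \<delta> (\<lambda>h. z h + D h - g h)"
      by (rule ismall_ibig[OF pairbig Qest \<delta>nn])
    have "ismall ?F \<delta> (\<lambda>h. z h - (z h + D h - g h))" by (rule ismall_diff[OF zs q])
    then show ?thesis by simp
  qed
  have gl: "ismall ?F \<delta> (\<lambda>h. g h - ell h)"
  proof -
    have "D h - ell h = (\<Sum>k\<in>{2..sM}. layer VM sM k (D h))" for h
    proof -
      have "D h = (\<Sum>k=1..sM. layer VM sM k (D h))" by (rule M.decomp)
      also have "\<dots> = layer VM sM 1 (D h) + (\<Sum>k=Suc 1..sM. layer VM sM k (D h))"
        by (rule sum.atLeast_Suc_atMost[OF M.s_ge1])
      finally show ?thesis unfolding ell_def numeral_2_eq_2 One_nat_def by (metis add_diff_cancel_left')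
    qed
    moreover have "ismall ?F \<delta> (\<lambda>h. \<Sum>k\<in>{2..sM}. layer VM sM k (D h))"
      by (rule ismall_sum[OF \<delta>nn]) (auto intro: Dhigh)
    ultimately have "ismall ?F \<delta> (\<lambda>h. D h - ell h)" by simp
    from ismall_add[OF gD this] show ?thesis by simp
  qed
  have Ysol: "X + Y h = M.sol (- X) (g h)" for h unfolding Y_def g_def by (rule M.sol_unique) simp
  have Y0: "(Y \<longlongrightarrow> 0) ?F"
  proof -
    have "((\<lambda>h. M.sol (- X) (g h)) \<longlongrightarrow> M.sol (- X) 0) ?F"
      by (intro M.tendsto_sol tendsto_const g0)
    then have "((\<lambda>h. X + Y h) \<longlongrightarrow> X) ?F" using Ysol M.solX by simp
    then have "((\<lambda>h. X + Y h - X) \<longlongrightarrow> X - X) ?F" by (intro tendsto_diff tendsto_const)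
    then show ?thesis by simp
  qed
  have gY: "g h = bch brM sM (- X) (X + Y h)" for h unfolding g_def Y_def by simp
  have Pest: "eventually (\<lambda>h. norm (g h - M.Psi X (Y h)) \<le> \<epsilon> * norm (Y h)) ?F" if e: "\<epsilon> > 0" for \<epsilon>
  proof -
    obtain \<eta> where \<eta>: "\<eta> > 0" "\<forall>y. norm (y - 0) < \<eta> \<longrightarrow>
        norm (bch brM sM (- X) (X + y) - bch brM sM (- X) (X + 0) - M.Psi X (y - 0)) \<le> \<epsilon> * norm (y - 0)"
      using M.Psi_deriv[of X] e unfolding has_derivative_at_alt by blast
    have "eventually (\<lambda>h. norm (Y h) < \<eta>) ?F"
      using order_tendstoD(2)[OF tendsto_norm_zero[OF Y0] \<eta>(1)] by simp
    then show ?thesis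
    proof eventually_elim
      case (elim h)
      then show ?case using \<eta>(2)[rule_format, of "Y h"] unfolding gY by simp
    qed
  qed
  define T where "T = M.Tinv X"
  have blT: "bounded_linear T" unfolding T_def using M.linear_Tinv linear_conv_bounded_linear by blast
  obtain CT where CT: "\<forall>v. norm (T v) \<le> norm v * CT" "CT > 0" using bounded_linear.pos_bounded[OF blT] by blast
  have TP: "T (M.Psi X v) = v" for v unfolding T_def by (rule M.Tinv_Psi)
  have Tlin: "T (a - b) = T a - T b" for a b using blT by (simp add: linear_diff bounded_linear.linear)
  have Ybig: "ibig ?F \<delta> Y"
  proof (rule ibig_mono[OF gbig _ \<delta>nn, of _ "2 * CT"])
    have e: "1 / (2 * CT) > 0" using CT by simp
    from Pest[OF e] show "eventually (\<lambda>h. norm (Y h) \<le> 2 * CT * norm (g h)) ?F"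
    proof eventually_elim
      case (elim h)
      have "Y h = T (g h) - T (g h - M.Psi X (Y h))" using TP[of "Y h"] Tlin by simp
      then have "norm (Y h) = norm (T (g h) - T (g h - M.Psi X (Y h)))" by simp
      also have "\<dots> \<le> norm (T (g h)) + norm (T (g h - M.Psi X (Y h)))"
        by (rule norm_triangle_ineq4)
      also have "\<dots> \<le> norm (g h) * CT + norm (g h - M.Psi X (Y h)) * CT" using CT(1) by (meson add_mono)
      also have "\<dots> \<le> norm (g h) * CT + (1 / (2 * CT) * norm (Y h)) * CT"
        using elim CT(2) by (intro add_mono mult_right_mono) auto
      also have "\<dots> = CT * norm (g h) + norm (Y h) / 2" using CT(2) by (simp add: field_simps)
      finally show ?case by linarith
    qed
  qed
  have r1: "ismall ?F \<delta> (\<lambda>h. T (g h - M.Psi X (Y h)))"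
  proof (rule ismall_ibig[OF Ybig _ \<delta>nn])
    fix \<epsilon> :: real assume e: "\<epsilon> > 0"
    have "\<epsilon> / CT > 0" using e CT by simp
    from Pest[OF this] show "eventually (\<lambda>h. norm (T (g h - M.Psi X (Y h))) \<le> \<epsilon> * norm (Y h)) ?F"
    proof eventually_elim
      case (elim h)
      have "norm (T (g h - M.Psi X (Y h))) \<le> norm (g h - M.Psi X (Y h)) * CT" using CT(1) by blast
      also have "\<dots> \<le> (\<epsilon> / CT * norm (Y h)) * CT" using elim CT(2) by (intro mult_right_mono) auto
      also have "\<dots> = \<epsilon> * norm (Y h)" using CT(2) by simp
      finally show ?case .
    qed
  qed
  have r2: "ismall ?F \<delta> (\<lambda>h. T (g h - ell h))" by (rule ismall_linear[OF gl blT])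
  have "ismall ?F \<delta> (\<lambda>h. T (g h - ell h) - T (g h - M.Psi X (Y h)))" by (rule ismall_diff[OF r2 r1])
  moreover have "T (g h - ell h) - T (g h - M.Psi X (Y h)) = Y h - T (ell h)" for h
    using TP[of "Y h"] Tlin by simp
  ultimately have "ismall ?F \<delta> (\<lambda>h. Y h - T (ell h))" by simp
  then show ?thesis unfolding Y_def T_def ell_def D_def X_def \<delta>_def .
qed

end

context ga begin

lemma hd_facts: assumes hd: "hom_dist br V s d"
  shows "\<And>x y. d x y = 0 \<longleftrightarrow> x = y" "\<And>x y. 0 \<le> d x y"
    "\<And>r x. r > 0 \<Longrightarrow> d (dil V s r x) 0 = r * d x 0"
    "eventually (\<lambda>h. d h 0 > 0) (at 0)"
proof -
  have d0: "d x y = 0 \<longleftrightarrow> x = y" for x y using hd unfolding hom_dist_def by blast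
  have dsym: "d x y = d y x" for x y using hd unfolding hom_dist_def by blast
  have dtri: "d x z \<le> d x y + d y z" for x y z using hd unfolding hom_dist_def by blast
  have dhom: "d (dil V s r x) (dil V s r y) = r * d x y" if "r > 0" for r x y
    using hd that unfolding hom_dist_def by blast
  show "d x y = 0 \<longleftrightarrow> x = y" for x y by (rule d0)
  show dnn: "0 \<le> d x y" for x y
  proof -
    have "d x x = 0" using d0 by simp
    then show ?thesis using dtri[where x=x and y=y and z=x] dsym[of y x] by linarith
  qed
  show "d (dil V s r x) 0 = r * d x 0" if "r > 0" for r x using dhom[OF that, of x 0] by simp
  have "eventually (\<lambda>h. h \<noteq> 0) (at (0::'a))" by (simp add: eventually_at_filter)
  then show "eventually (\<lambda>h. d h 0 > 0) (at 0)"
    by eventually_elim (use d0 dnn in \<open>auto simp: order_le_less\<close>)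
qed

lemma Pvec_zero: assumes "P_diff_vec br V s d Wj F x L" shows "L 0 = 0"
proof -
  have "L (bch br s 0 0) = L 0 + L 0" using assms unfolding P_diff_vec_def by blast
  then show ?thesis by simp
qed

lemma Pvec_unique:
  assumes hd: "hom_dist br V s d" and p1: "P_diff_vec br V s d Wj F x L1" and p2: "P_diff_vec br V s d Wj F x L2"
  shows "L1 = L2"
proof
  fix h
  show "L1 h = L2 h"
  proof (cases "h = 0")
    case True then show ?thesis using Pvec_zero[OF p1] Pvec_zero[OF p2] by simp
  next
    case False
    note hf = hd_facts[OF hd]
    have h1: "L1 (dil V s r k) = r *\<^sub>R L1 k" "L2 (dil V s r k) = r *\<^sub>R L2 k" if "r > 0" for r k
      using p1 p2 that unfolding P_diff_vec_def by blast+
    have l1: "((\<lambda>k. norm ((- F x + F (bch br s x k)) - L1 k) / d k 0) \<longlongrightarrow> 0) (at 0)"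
      using p1 unfolding P_diff_vec_def by blast
    have l2: "((\<lambda>k. norm ((- F x + F (bch br s x k)) - L2 k) / d k 0) \<longlongrightarrow> 0) (at 0)"
      using p2 unfolding P_diff_vec_def by blast
    have fl: "filterlim (\<lambda>r. dil V s r h) (at 0) (at_right 0)"
    proof (rule filterlim_atI)
      show "((\<lambda>r. dil V s r h) \<longlongrightarrow> 0) (at_right 0)" by (rule tendsto_dil0)
      have "Nh h > 0" using False Nh_eq0 Nh_nonneg[of h] by force
      then have "dil V s r h \<noteq> 0" if "r > 0" for r using Nh_dil[OF that, of h] that by auto
      then show "eventually (\<lambda>r. dil V s r h \<noteq> 0) (at_right 0)"
        by (simp add: eventually_at_right_less eventually_at_right_field) (auto intro: exI[of _ 1])
    qed
    define A where "A k = norm ((- F x + F (bch br s x k)) - L1 k) / d k 0 + norm ((- F x + F (bch br s x k)) - L2 k) / d k 0" for k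
    have lA: "(A \<longlongrightarrow> 0) (at 0)" unfolding A_def using tendsto_add[OF l1 l2] by simp
    have lAr: "((\<lambda>r. A (dil V s r h)) \<longlongrightarrow> 0) (at_right 0)" by (rule filterlim_compose[OF lA fl])
    define c where "c = norm (L1 h - L2 h) / d h 0"
    have dh: "d h 0 > 0" using hf(1)[of h 0] hf(2)[of h 0] False by (simp add: order_le_less)
    have "eventually (\<lambda>r. norm c \<le> A (dil V s r h)) (at_right 0)"
    proof -
      have "norm c \<le> A (dil V s r h)" if r: "r > 0" for r
      proof -
        define k where "k = dil V s r h"
        have dk: "d k 0 = r * d h 0" unfolding k_def using hf(3)[OF r] .
        have "L1 k - L2 k = r *\<^sub>R (L1 h - L2 h)" unfolding k_def using h1[OF r] by (simp add: scaleR_diff_right)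
        then have "norm (L1 k - L2 k) / d k 0 = c" unfolding dk c_def using r dh by simp
        moreover have "norm (L1 k - L2 k) \<le> norm ((- F x + F (bch br s x k)) - L1 k) + norm ((- F x + F (bch br s x k)) - L2 k)"
          using norm_triangle_ineq4[of "(- F x + F (bch br s x k)) - L2 k" "(- F x + F (bch br s x k)) - L1 k"]
          by (simp add: norm_minus_commute add.commute)
        ultimately have "c \<le> A k" unfolding A_def using dk r dh
          by (metis add_divide_distrib divide_right_mono less_imp_le mult_pos_pos)
        moreover have "0 \<le> c" unfolding c_def using dh by simp
        ultimately show ?thesis unfolding k_def by simp
      qed
      then show ?thesis by (simp add: eventually_at_right_field) (auto intro: exI[of _ 1])
    qed
    then have "((\<lambda>r::real. c) \<longlongrightarrow> 0) (at_right (0::real))" by (rule Lim_null_comparison[OF _ lAr])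
    note cl = this
    have nb: "at_right (0::real) \<noteq> bot" by (simp add: trivial_limit_at_right_real)
    have "c = 0" using tendsto_unique[OF nb tendsto_const cl] .
    then show ?thesis unfolding c_def using dh by simp
  qed
qed

end
theorem theorem4p13:
  fixes brG :: "'g::euclidean_space \<Rightarrow> 'g \<Rightarrow> 'g" and V :: "nat \<Rightarrow> 'g set" and \<iota> :: nat
    and brM :: "'m::euclidean_space \<Rightarrow> 'm \<Rightarrow> 'm" and W :: "nat \<Rightarrow> 'm set" and \<upsilon> :: nat
    and d :: "'g \<Rightarrow> 'g \<Rightarrow> real" and \<rho> :: "'m \<Rightarrow> 'm \<Rightarrow> real"
    and \<Omega> :: "'g set" and f :: "'g \<Rightarrow> 'm" and x :: 'g and Df :: "'g \<Rightarrow> 'm"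
  assumes "stratified brG V \<iota>"
    and "graded_of_step brM W \<upsilon>"
    and "hom_dist brG V \<iota> d"
    and "hom_dist brM W \<upsilon> \<rho>"
    and "open \<Omega>" and "x \<in> \<Omega>"
    and "P_diff brG V \<iota> d brM W \<upsilon> \<rho> f x Df"
  shows "(\<forall>j\<in>{1..\<upsilon>}. \<exists>L. P_diff_vec brG V \<iota> d (W j) (\<lambda>y. layer W \<upsilon> j (f y)) x L) \<and>
         (\<forall>dF. (\<forall>j\<in>{1..\<upsilon>}. P_diff_vec brG V \<iota> d (W j) (\<lambda>y. layer W \<upsilon> j (f y)) x (dF j)) \<longrightarrow>
            (\<forall>h. layer W \<upsilon> 1 (Df h) = dF 1 h) \<and>
            (\<forall>i\<in>{2..\<upsilon>}. \<forall>h. dF i h =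
               (\<Sum>n=2..\<upsilon>. ((-1) ^ n / fact n) *\<^sub>R
                  layer W \<upsilon> i (iter_br brM (n - 1) (f x) (\<Sum>j=1..\<upsilon>. dF j h)))))"
proof -
  have gaG: "ga brG V \<iota>" using assms(1) unfolding stratified_def by (intro ga.intro) blast
  have gaM: "ga brM W \<upsilon>" using assms(2) unfolding graded_of_step_def by (intro ga.intro) blast
  interpret gm brG V \<iota> brM W \<upsilon> by (rule gm.intro[OF gaG gaM])
  have hdG: "hom_dist brG V \<iota> d" and hdM: "hom_dist brM W \<upsilon> \<rho>" and pd: "P_diff brG V \<iota> d brM W \<upsilon> \<rho> f x Df"
    using assms by auto
  have hh: "hhom brG V \<iota> brM W \<upsilon> Df" using pd unfolding P_diff_def by blast
  define X where "X = f x"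
  define T where "T = M.Tinv X"
  define ell where "ell h = layer W \<upsilon> 1 (Df h)" for h
  define L where "L j h = layer W \<upsilon> j (T (ell h))" for j h
  have linT: "linear T" unfolding T_def by (rule M.linear_Tinv)
  have ell_add: "ell (bch brG \<iota> a b) = ell a + ell b" for a b
    using hh M.layer1_bch unfolding hhom_def ell_def by simp
  have ell_dil: "ell (dil V \<iota> r h) = r *\<^sub>R ell h" if "r > 0" for r h
    using hh that M.layer_dil[of 1] unfolding hhom_def ell_def by simp
  have ellV: "ell h \<in> W 1" for h unfolding ell_def by (rule M.layer_in)
  have core': "ismall (at 0) (\<lambda>h. d h 0) (\<lambda>h. (f (bch brG \<iota> x h) - f x) - T (ell h))"
    using core[OF hdG hdM pd] unfolding T_def X_def ell_def .
  have dpos: "eventually (\<lambda>h. d h 0 > 0) (at 0)" by (rule G.hd_facts(4)[OF hdG])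
  have PL: "P_diff_vec brG V \<iota> d (W j) (\<lambda>y. layer W \<upsilon> j (f y)) x (L j)" for j
    unfolding P_diff_vec_def
  proof (intro conjI allI impI)
    fix h show "L j h \<in> W j" unfolding L_def by (rule M.layer_in)
  next
    fix a b show "L j (bch brG \<iota> a b) = L j a + L j b"
      unfolding L_def ell_add linear_add[OF linT] M.layer_add ..
  next
    fix r :: real and h assume "r > 0"
    show "L j (dil V \<iota> r h) = r *\<^sub>R L j h"
      unfolding L_def ell_dil[OF \<open>r > 0\<close>] linear_cmul[OF linT] M.layer_scale by (rule refl)
  next
    have "ismall (at 0) (\<lambda>h. d h 0) (\<lambda>h. layer W \<upsilon> j ((f (bch brG \<iota> x h) - f x) - T (ell h)))"
      by (rule ismall_linear[OF core' M.bl_layer])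
    moreover have "layer W \<upsilon> j ((f (bch brG \<iota> x h) - f x) - T (ell h)) =
        (- layer W \<upsilon> j (f x) + layer W \<upsilon> j (f (bch brG \<iota> x h))) - L j h" for h
      unfolding L_def by (simp add: M.layer_diff)
    ultimately have "ismall (at 0) (\<lambda>h. d h 0) (\<lambda>h. (- layer W \<upsilon> j (f x) + layer W \<upsilon> j (f (bch brG \<iota> x h))) - L j h)"
      by simp
    then show "((\<lambda>h. norm ((- layer W \<upsilon> j (f x) + layer W \<upsilon> j (f (bch brG \<iota> x h))) - L j h) / d h 0) \<longlongrightarrow> 0) (at 0)"
      using iffD1[OF ismall_tendsto[OF dpos] \<open>ismall (at 0) (\<lambda>h. d h 0) (\<lambda>h. (- layer W \<upsilon> j (f x) + layer W \<upsilon> j (f (bch brG \<iota> x h))) - L j h)\<close>] by simp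
  qed
  show ?thesis
  proof (intro conjI allI impI ballI)
    fix j assume "j \<in> {1..\<upsilon>}"
    show "\<exists>L. P_diff_vec brG V \<iota> d (W j) (\<lambda>y. layer W \<upsilon> j (f y)) x L" using PL by blast
  next
    fix dF :: "nat \<Rightarrow> 'g \<Rightarrow> 'm"
    assume dF: "\<forall>j\<in>{1..\<upsilon>}. P_diff_vec brG V \<iota> d (W j) (\<lambda>y. layer W \<upsilon> j (f y)) x (dF j)"
    have dFL: "dF j = L j" if "j \<in> {1..\<upsilon>}" for j
      using G.Pvec_unique[OF hdG, of "W j" "\<lambda>y. layer W \<upsilon> j (f y)" x "dF j" "L j"] dF that PL by blast
    have one: "1 \<in> {1..\<upsilon>}" using M.s_ge1 by simp
    fix h
    show "layer W \<upsilon> 1 (Df h) = dF 1 h"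
      unfolding dFL[OF one] L_def T_def M.pr1_Tinv ell_def M.layer_layer by simp
  next
    fix dF :: "nat \<Rightarrow> 'g \<Rightarrow> 'm" and i h
    assume dF: "\<forall>j\<in>{1..\<upsilon>}. P_diff_vec brG V \<iota> d (W j) (\<lambda>y. layer W \<upsilon> j (f y)) x (dF j)"
      and i: "i \<in> {2..\<upsilon>}"
    have dFL: "dF j = L j" if "j \<in> {1..\<upsilon>}" for j
      using G.Pvec_unique[OF hdG, of "W j" "\<lambda>y. layer W \<upsilon> j (f y)" x "dF j" "L j"] dF that PL by blast
    have sumdF: "(\<Sum>j=1..\<upsilon>. dF j h) = T (ell h)"
    proof -
      have "(\<Sum>j=1..\<upsilon>. dF j h) = (\<Sum>j=1..\<upsilon>. layer W \<upsilon> j (T (ell h)))"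
        using dFL unfolding L_def by (intro sum.cong refl) auto
      also have "\<dots> = T (ell h)" by (rule M.decomp_sym)
      finally show ?thesis .
    qed
    have "dF i h = L i h" using dFL i by auto
    also have "\<dots> = (\<Sum>n=2..\<upsilon>. ((-1) ^ n / fact n) *\<^sub>R layer W \<upsilon> i ((brM X ^^ (n - 1)) (T (ell h))))"
      unfolding L_def T_def by (rule M.layer_formula[OF ellV]) (use i in auto)
    finally show "dF i h = (\<Sum>n=2..\<upsilon>. ((-1) ^ n / fact n) *\<^sub>R
                  layer W \<upsilon> i (iter_br brM (n - 1) (f x) (\<Sum>j=1..\<upsilon>. dF j h)))"
      unfolding sumdF iter_br_def X_def .
  qed
qed

end
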